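(* Let $\mathcal{W}',\hat{\mathcal{W}}'\in\mathbb{K}^{I_1\times\cdots\times I_\ell}$ have multilinear ranks $(R_1,\dots,R_\ell)$ and $(\hat{R}_1,\dots,\hat{R}_\ell)$ respectively. Fix $j$ and let $\mathbf{V}\in\mathbb{K}^{I_j\times R_j}$ have orthonormal columns whose range equals the span of the mode-$j$ fibers of $\mathcal{W}'$. If $\hat{R}_j\leq R_j$, then there is $\hat{\mathbf{V}}\in\mathbb{K}^{I_j\times R_j}$ with orthonormal columns whose range contains the span of the mode-$j$ fibers of $\hat{\mathcal{W}}'$, such that $$\|\mathcal{W}'\cdot_j\mathbf{V}^{\mathrm{H}}-\hat{\mathcal{W}}'\cdot_j\hat{\mathbf{V}}^{\mathrm{H}}\|_{\mathrm{F}}\leq\|\mathcal{W}'-\hat{\mathcal{W}}'\|_{\mathrm{F}}.$$ Consequently, with $R^*_i=\max\{R_i,\hat{R}_i\}$, there exist orthogonal compressions $\mathcal{W},\hat{\mathcal{W}}\in\mathbb{K}^{R^*_1\times\cdots\times R^*_\ell}$ of $\mathcal{W}'$ and $\hat{\mathcal{W}}'$ respectively with $\|\mathcal{W}-\hat{\mathcal{W}}\|_{\mathrm{F}}\leq\|\mathcal{W}'-\hat{\mathcal{W}}'\|_{\mathrm{F}}$.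
   Context: $\mathbb{K}$ denotes $\mathbb{R}$ or $\mathbb{C}$. Mode-$i$ fibers of an order-$\ell$ tensor are the vectors obtained by varying the $i$th index with the others fixed; the multilinear rank is $(R_1,\dots,R_\ell)$ with $R_i$ the dimension of the span of the mode-$i$ fibers. $\mathcal{X}\cdot_i\mathbf{M}$ applies the matrix $\mathbf{M}$ to every mode-$i$ fiber. Here an orthogonal compression of $\mathcal{X}\in\mathbb{K}^{I_1\times\cdots\times I_\ell}$ to size $R^*_1\times\cdots\times R^*_\ell$ means $\mathcal{X}\cdot_1\mathbf{V}_1^{\mathrm{H}}\cdots\cdot_\ell\mathbf{V}_\ell^{\mathrm{H}}$ where each $\mathbf{V}_i\in\mathbb{K}^{I_i\times R^*_i}$ has orthonormal columns whose range contains the span of the mode-$i$ fibers of $\mathcal{X}$. *)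

theory Defs
  imports Complex_Main "Jordan_Normal_Form.Schur_Decomposition" "Jordan_Normal_Form.VS_Connect"
begin

text \<open>The scalar field K (real or complex): a normed field with a conjugation
  compatible with the norm.  Instances: real and complex.\<close>
class rc_field = conjugatable_field + real_normed_field +
  assumes mult_conjugate_norm: "x * conjugate x = (norm x)^2 *\<^sub>R 1"

instance real :: rc_field
  by standard (simp add: power2_eq_square)

instance complex :: rc_field
  by standard (metis complex_norm_square conjugate_complex_def mult.right_neutral scaleR_conv_of_real)

text \<open>An order-l tensor with dimensions I = [I_1,...,I_l] is a function on index
  lists; only the values on valid index lists (tidx I) are relevant.
  Indices are 0-based.\<close>
type_synonym 'a tensor = "nat list \<Rightarrow> 'a"

definition tidx :: "nat list \<Rightarrow> nat list set" where
  "tidx I = {is. length is = length I \<and> (\<forall>k<length I. is ! k < I ! k)}"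

definition fiber :: "'a tensor \<Rightarrow> nat list \<Rightarrow> nat \<Rightarrow> nat list \<Rightarrow> 'a vec" where
  "fiber X I j is = vec (I ! j) (\<lambda>t. X (is[j := t]))"

definition mode_fibers :: "nat list \<Rightarrow> nat \<Rightarrow> 'a tensor \<Rightarrow> 'a vec set" where
  "mode_fibers I j X = fiber X I j ` tidx I"

definition fiber_span :: "nat list \<Rightarrow> nat \<Rightarrow> 'a::field tensor \<Rightarrow> 'a vec set" where
  "fiber_span I j X = LinearCombinations.module.span class_ring (module_vec TYPE('a) (I ! j)) (mode_fibers I j X)"

definition mlrank_mode :: "nat list \<Rightarrow> nat \<Rightarrow> 'a::field tensor \<Rightarrow> nat" where
  "mlrank_mode I j X =
     vectorspace.dim class_ring ((module_vec TYPE('a) (I ! j))\<lparr>carrier := fiber_span I j X\<rparr>)"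

definition has_mlrank :: "nat list \<Rightarrow> 'a::field tensor \<Rightarrow> nat list \<Rightarrow> bool" where
  "has_mlrank I X R \<longleftrightarrow> length R = length I \<and> (\<forall>j<length I. mlrank_mode I j X = R ! j)"

text \<open>Mode-j product X \<cdot>_j M: M applied to every mode-j fiber
  (the mode-j dimension of X is dim_col M; the result has mode-j dimension dim_row M).\<close>
definition mode_prod :: "'a::comm_ring tensor \<Rightarrow> nat \<Rightarrow> 'a mat \<Rightarrow> 'a tensor" where
  "mode_prod X j M = (\<lambda>is. \<Sum>t<dim_col M. M $$ (is ! j, t) * X (is[j := t]))"

definition frob :: "nat list \<Rightarrow> 'a::real_normed_field tensor \<Rightarrow> real" where
  "frob I X = sqrt (\<Sum>is\<in>tidx I. (norm (X is))^2)"

definition orthonormal_cols :: "'a::conjugatable_field mat \<Rightarrow> bool" where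
  "orthonormal_cols V \<longleftrightarrow> mat_adjoint V * V = 1\<^sub>m (dim_col V)"

definition mat_range :: "'a::comm_ring mat \<Rightarrow> 'a vec set" where
  "mat_range V = {V *\<^sub>v x | x. x \<in> carrier_vec (dim_col V)}"

text \<open>X \<cdot>_1 V_1^H \<cdot>_2 V_2^H ... \<cdot>_l V_l^H (modes 0-based).\<close>
definition compress :: "'a::conjugatable_field tensor \<Rightarrow> 'a mat list \<Rightarrow> 'a tensor" where
  "compress X Vs = foldl (\<lambda>Y (i, V). mode_prod Y i (mat_adjoint V)) X (zip [0..<length Vs] Vs)"

definition orth_compression_mats ::
  "nat list \<Rightarrow> 'a::conjugatable_field tensor \<Rightarrow> nat list \<Rightarrow> 'a mat list \<Rightarrow> bool" where
  "orth_compression_mats I X Rs Vs \<longleftrightarrow>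
     length Vs = length I \<and> length Rs = length I \<and>
     (\<forall>i<length I. Vs ! i \<in> carrier_mat (I ! i) (Rs ! i) \<and> orthonormal_cols (Vs ! i) \<and>
        fiber_span I i X \<subseteq> mat_range (Vs ! i))"

end

theory Submission
  imports Defs "Jordan_Normal_Form.Spectral_Radius"
begin

lemma mcn: "(x::'a::rc_field) * conjugate x = of_real ((norm x)^2)"
  using mult_conjugate_norm[of x] by (simp add: of_real_def)

lemma conj_one[simp]: "conjugate (1::'a::rc_field) = 1"
  using mcn[of "1::'a"] by simp

lemma conj_diff: "conjugate (a - b :: 'a::conjugatable_ring) = conjugate a - conjugate b"
  by (metis conjugate_dist_add conjugate_neg diff_conv_add_uminus)

lemmas conj_simps = conjugate_dist_add conjugate_dist_mul conjugate_neg conj_diff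

definition re :: "'a::rc_field \<Rightarrow> real" where
  "re z = ((norm (1+z))^2 - 1 - (norm z)^2) / 2"

lemma re_conj: "z + conjugate z = 2 * (of_real (re z) :: 'a::rc_field)"
proof -
  have "(1+z) * conjugate (1+z) = of_real ((norm (1+z))^2)" by (rule mcn)
  also have "(1+z) * conjugate (1+z) = 1 + (z + conjugate z) + z * conjugate z"
    by (simp add: conjugate_dist_add algebra_simps)
  finally have "z + conjugate z = of_real ((norm (1+z))^2) - 1 - of_real ((norm z)^2)"
    unfolding mcn by (simp add: algebra_simps)
  also have "\<dots> = of_real (2 * re z)" unfolding re_def by simp
  finally show ?thesis by simp
qed

lemma re_unique: assumes "z + conjugate z = 2 * (of_real c :: 'a::rc_field)" shows "re z = c"
proof -
  have "2 * (of_real (re z) :: 'a) = 2 * of_real c" using assms re_conj[of z] by simp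
  hence "(of_real (re z) :: 'a) = of_real c" by simp
  thus ?thesis using of_real_eq_iff by blast
qed

lemma conj_of_real[simp]: "conjugate (of_real c :: 'a::rc_field) = of_real c"
proof -
  define u :: 'a where "u = of_real c"
  have 1: "conjugate u = of_real (2 * re u - c)"
    using re_conj[of u] unfolding u_def by (simp add: algebra_simps)
  have "u * conjugate u = of_real (c^2)" using mcn[of u] unfolding u_def by simp
  hence "(of_real (c * (2 * re u - c)) :: 'a) = of_real (c^2)" unfolding 1 unfolding u_def
    by (metis of_real_mult)
  hence "c * (2 * re u - c) = c^2" using of_real_eq_iff by blast
  hence "c = 0 \<or> 2 * re u - c = c" by (simp add: power2_eq_square)
  thus ?thesis using 1 unfolding u_def by auto
qed

lemma norm_conj[simp]: "norm (conjugate (z::'a::rc_field)) = norm z"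
proof -
  have "of_real ((norm (conjugate z))^2) = (of_real ((norm z)^2) :: 'a)"
    using mcn[of "conjugate z"] mcn[of z] by (simp add: mult.commute)
  hence "(norm (conjugate z))^2 = (norm z)^2" using of_real_eq_iff by blast
  thus ?thesis by (simp add: power2_eq_iff_nonneg)
qed

lemma re_add[simp]: "re (z + w :: 'a::rc_field) = re z + re w"
proof (rule re_unique)
  show "z + w + conjugate (z + w) = 2 * (of_real (re z + re w) :: 'a)"
    using re_conj[of z] re_conj[of w] by (simp add: conjugate_dist_add algebra_simps)
qed

lemma re_neg[simp]: "re (- z :: 'a::rc_field) = - re z"
proof (rule re_unique)
  show "- z + conjugate (- z) = 2 * (of_real (- re z) :: 'a)"
    using re_conj[of z] by (simp add: conjugate_neg algebra_simps)
qed

lemma re_diff[simp]: "re (z - w :: 'a::rc_field) = re z - re w"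
  using re_add[of z "-w"] by simp

lemma re_zero[simp]: "re (0::'a::rc_field) = 0"
  using re_add[of "0::'a" 0] by simp

lemma re_of_real_mult[simp]: "re (of_real c * z :: 'a::rc_field) = c * re z"
proof (rule re_unique)
  show "of_real c * z + conjugate (of_real c * z) = 2 * (of_real (c * re z) :: 'a)"
  proof -
    have "of_real c * z + conjugate (of_real c * z) = of_real c * (z + conjugate z)"
      by (simp add: conjugate_dist_mul distrib_left)
    also have "\<dots> = 2 * (of_real (c * re z) :: 'a)" unfolding re_conj by simp
    finally show ?thesis .
  qed
qed

lemma re_mult_of_real[simp]: "re (z * of_real c :: 'a::rc_field) = c * re z"
  using re_of_real_mult[of c z] by (simp add: mult.commute)

lemma re_one[simp]: "re (1::'a::rc_field) = 1"
  by (rule re_unique) simp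

lemma re_of_real[simp]: "re (of_real c :: 'a::rc_field) = c"
  using re_of_real_mult[of c 1] by simp

lemma re_conjugate[simp]: "re (conjugate z :: 'a::rc_field) = re z"
  by (rule re_unique) (simp add: re_conj[symmetric] add.commute)

lemma re_le_norm: "re (z::'a::rc_field) \<le> norm z"
proof -
  have "norm (1+z) \<le> 1 + norm z" using norm_triangle_ineq[of 1 z] by simp
  hence "(norm (1+z))^2 \<le> (1 + norm z)^2" by (simp add: power_mono)
  thus ?thesis unfolding re_def by (simp add: power2_eq_square algebra_simps)
qed

lemma re_sum: "re (sum f A :: 'a::rc_field) = (\<Sum>x\<in>A. re (f x))"
  by (induct A rule: infinite_finite_induct) auto

lemma re_mult_conj[simp]: "re ((z::'a::rc_field) * conjugate z) = (norm z)^2"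
  unfolding mcn by (rule re_of_real)

lemma norm_diff_sq: "(norm ((a::'a::rc_field) - b))^2 = (norm a)^2 + (norm b)^2 - 2 * re (a * conjugate b)"
proof -
  have "of_real ((norm (a - b))^2) = (a - b) * conjugate (a - b)" by (simp add: mcn)
  also have "\<dots> = a * conjugate a + b * conjugate b - (a * conjugate b + conjugate (a * conjugate b))"
    by (simp add: conj_simps algebra_simps)
  also have "\<dots> = of_real ((norm a)^2 + (norm b)^2 - 2 * re (a * conjugate b))"
    by (simp add: mcn re_conj)
  finally show ?thesis using of_real_eq_iff by blast
qed

lemma real_if_conj_eq: "conjugate z = z \<Longrightarrow> z = (of_real (re z) :: 'a::rc_field)"
  using re_conj[of z] by simp

lemma conj_im_part: "conjugate (z - of_real (re z)) = - (z - of_real (re z) :: 'a::rc_field)"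
proof -
  have "conjugate z = 2 * of_real (re z) - z" using re_conj[of z] by (simp add: algebra_simps)
  thus ?thesis by (simp add: conj_diff)
qed

lemma no_j_real:
  assumes nj: "\<not> (\<exists>j::'a::rc_field. j * j = -1)"
  shows "(x::'a) = of_real (re x)"
proof (rule ccontr)
  define y where "y = x - of_real (re x)"
  assume "x \<noteq> of_real (re x)"
  hence y0: "y \<noteq> 0" unfolding y_def by simp
  have cy: "conjugate y = - y" unfolding y_def by (rule conj_im_part)
  have "y * y = - (y * conjugate y)" using cy by simp
  also have "\<dots> = - of_real ((norm y)^2)" by (simp add: mcn)
  finally have yy: "y * y = - of_real ((norm y)^2)" .
  define j where "j = y / of_real (norm y)"
  have ny: "norm y \<noteq> 0" using y0 by simp
  have "j * j = (y * y) / (of_real (norm y) * of_real (norm y))" unfolding j_def by simp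
  also have "\<dots> = - 1" unfolding yy using ny
    by (simp add: power2_eq_square of_real_mult[symmetric] del: of_real_mult)
  finally have "j * j = -1" .
  thus False using nj by auto
qed

definition cj :: "'a::rc_field" where "cj = (SOME j. j * j = -1)"

lemma cj_sq: "\<exists>j::'a::rc_field. j * j = -1 \<Longrightarrow> cj * cj = (-1::'a)"
  unfolding cj_def by (rule someI_ex)

lemma cj_conj: assumes "\<exists>j::'a::rc_field. j * j = -1" shows "conjugate (cj::'a) = - cj"
proof -
  have jj: "cj * cj = (-1::'a)" using cj_sq[OF assms] .
  have "norm ((cj::'a) * cj) = 1" unfolding jj by simp
  hence "(norm (cj::'a))^2 = 1" by (simp add: norm_mult power2_eq_square)
  hence 1: "cj * conjugate cj = (1::'a)" by (simp add: mcn)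
  have 2: "cj * (- cj) = (1::'a)" using jj by simp
  have "(cj::'a) \<noteq> 0" using jj by auto
  with 1 2 show ?thesis by (metis mult_left_cancel)
qed

lemma re_cj: assumes "\<exists>j::'a::rc_field. j * j = -1" shows "re (cj::'a) = 0"
  using re_conjugate[of "cj::'a"] cj_conj[OF assms] by simp

lemma dec_j:
  assumes ex: "\<exists>j::'a::rc_field. j * j = -1"
  shows "x = of_real (re x) + of_real (re (- (cj * x))) * (cj::'a)"
proof -
  define y where "y = x - of_real (re x)"
  have cy: "conjugate y = - y" unfolding y_def by (rule conj_im_part)
  define z where "z = - (cj * y)"
  have cz: "conjugate z = z" unfolding z_def using cy cj_conj[OF ex]
    by (simp add: conj_simps)
  have z: "z = of_real (re z)" by (rule real_if_conj_eq[OF cz])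
  have e: "cj * z = - ((cj * cj) * y)" unfolding z_def by (simp add: algebra_simps)
  have "cj * z = y" unfolding e cj_sq[OF ex] by simp
  hence "x = of_real (re x) + cj * of_real (re z)" using z unfolding y_def by (metis add.commute diff_add_cancel)
  moreover have "re z = re (- (cj * x))" unfolding z_def y_def using re_cj[OF ex]
    by (simp add: algebra_simps)
  ultimately show ?thesis by (simp add: mult.commute)
qed

lemma re_dec: assumes ex: "\<exists>j::'a::rc_field. j * j = -1"
  shows "re (of_real a + of_real b * (cj::'a)) = a"
  using re_cj[OF ex] by simp

lemma im_dec: assumes ex: "\<exists>j::'a::rc_field. j * j = -1"
  shows "re (- (cj * (of_real a + of_real b * (cj::'a)))) = b"
proof -
  have e: "- (cj * (of_real a + of_real b * (cj::'a))) = - (of_real a * cj) - of_real b * (cj * cj)"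
    by (simp add: algebra_simps)
  have "- (cj * (of_real a + of_real b * (cj::'a))) = - (of_real a * cj) + of_real b"
    unfolding e cj_sq[OF ex] by simp
  thus ?thesis using re_cj[OF ex] by simp
qed

definition psi :: "'a::rc_field \<Rightarrow> complex" where
  "psi x = (if \<exists>j::'a. j * j = -1 then Complex (re x) (re (- (cj * x))) else complex_of_real (re x))"

lemma psi_dec: assumes ex: "\<exists>j::'a::rc_field. j * j = -1"
  shows "psi (of_real a + of_real b * (cj::'a)) = Complex a b"
  unfolding psi_def using ex re_dec[OF ex] im_dec[OF ex] by simp

lemma psi_add: "psi (x + y :: 'a::rc_field) = psi x + psi y"
  unfolding psi_def by (auto simp: algebra_simps complex_eq_iff)

lemma psi_one: "psi (1 :: 'a::rc_field) = 1"
proof (cases "\<exists>j::'a. j * j = -1")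
  case True
  have "psi (of_real 1 + of_real 0 * (cj::'a)) = Complex 1 0" by (rule psi_dec[OF True])
  thus ?thesis by (simp add: complex_eq_iff)
qed (simp add: psi_def)

lemma psi_mult: "psi (x * y :: 'a::rc_field) = psi x * psi y"
proof (cases "\<exists>j::'a. j * j = -1")
  case True
  define a where "a = re x" define b where "b = re (- (cj * x))"
  define c where "c = re y" define d where "d = re (- (cj * y))"
  have x: "x = of_real a + of_real b * cj" unfolding a_def b_def by (rule dec_j[OF True])
  have y: "y = of_real c + of_real d * cj" unfolding c_def d_def by (rule dec_j[OF True])
  have e: "(of_real a + of_real b * cj) * (of_real c + of_real d * cj) =
     of_real a * of_real c + (of_real b * of_real d) * (cj * cj) + (of_real a * of_real d + of_real b * of_real c) * (cj::'a)"
    by (simp add: algebra_simps)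
  have xy: "x * y = of_real (a*c - b*d) + of_real (a*d + b*c) * cj"
    unfolding x y e cj_sq[OF True] by simp
  have "psi (x * y) = Complex (a*c - b*d) (a*d + b*c)" unfolding xy by (rule psi_dec[OF True])
  moreover have "psi x = Complex a b" "psi y = Complex c d" using psi_dec[OF True] x y by auto
  ultimately show ?thesis by (simp add: complex_eq_iff)
next
  case False
  have "x * y = of_real (re x) * of_real (re y)" using no_j_real[OF False] by metis
  hence "re (x * y) = re x * re y" by (metis of_real_mult re_of_real)
  thus ?thesis unfolding psi_def using False by simp
qed

lemma psi_inj: "psi (x :: 'a::rc_field) = psi y \<Longrightarrow> x = y"
proof (cases "\<exists>j::'a. j * j = -1")
  case True
  assume "psi x = psi y"
  hence "re x = re y" "re (- (cj * x)) = re (- (cj * y))" unfolding psi_def using True by auto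
  thus ?thesis using dec_j[OF True, of x] dec_j[OF True, of y] by metis
next
  case False
  assume "psi x = psi y"
  hence "re x = re y" unfolding psi_def using False by auto
  thus ?thesis using no_j_real[OF False, of x] no_j_real[OF False, of y] by metis
qed

lemma psi_conj: "psi (conjugate x :: 'a::rc_field) = cnj (psi x)"
proof (cases "\<exists>j::'a. j * j = -1")
  case True
  define a where "a = re x" define b where "b = re (- (cj * x))"
  have x: "x = of_real a + of_real b * cj" unfolding a_def b_def by (rule dec_j[OF True])
  have "conjugate x = of_real a + of_real (- b) * cj" unfolding x using cj_conj[OF True]
    by (simp add: conj_simps)
  hence "psi (conjugate x) = Complex a (-b)" using psi_dec[OF True, of a "-b"] by metis
  moreover have "psi x = Complex a b" using psi_dec[OF True] x by auto
  ultimately show ?thesis by (simp add: complex_eq_iff)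
next
  case False
  then show ?thesis unfolding psi_def by simp
qed

lemma psi_of_real: "psi (of_real c :: 'a::rc_field) = complex_of_real c"
proof (cases "\<exists>j::'a. j * j = -1")
  case True
  have "psi (of_real c + of_real 0 * (cj::'a)) = Complex c 0" by (rule psi_dec[OF True])
  thus ?thesis by (simp add: complex_eq_iff)
qed (simp add: psi_def)

lemma psi_zero: "psi (0 :: 'a::rc_field) = 0"
  using psi_add[of "0::'a" 0] by simp

interpretation psi_hom: comm_ring_hom "psi :: 'a::rc_field \<Rightarrow> complex"
proof
  show "psi 1 = 1" by (rule psi_one)
  show "psi 0 = 0" by (rule psi_zero)
  fix x y :: 'a
  show "psi (x * y) = psi x * psi y" by (rule psi_mult)
  show "psi (x + y) = psi x + psi y" by (rule psi_add)
qed

lemma adj_dim_row[simp]: "dim_row (mat_adjoint A) = dim_col A"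
  unfolding mat_adjoint_def by simp
lemma adj_dim_col[simp]: "dim_col (mat_adjoint A) = dim_row A"
  unfolding mat_adjoint_def by simp
lemma adj_index[simp]: "i < dim_col A \<Longrightarrow> j < dim_row A \<Longrightarrow> mat_adjoint A $$ (i,j) = conjugate (A $$ (j,i))"
  unfolding mat_adjoint_def by (simp add: mat_of_rows_index)
lemma adj_carrier[simp]: "A \<in> carrier_mat n m \<Longrightarrow> mat_adjoint A \<in> carrier_mat m n"
  by auto
lemma adj_adj[simp]: "mat_adjoint (mat_adjoint (A::'a::conjugatable_field mat)) = A"
  by (rule eq_matI) auto
lemma adj_one[simp]: "mat_adjoint (1\<^sub>m n :: 'a::rc_field mat) = 1\<^sub>m n"
  by (rule eq_matI) auto

lemma adj_mult: fixes A :: "'a::conjugatable_field mat"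
  assumes "A \<in> carrier_mat n m" "B \<in> carrier_mat m k"
  shows "mat_adjoint (A * B) = mat_adjoint B * mat_adjoint A"
proof (rule eq_matI)
  fix i j assume ij: "i < dim_row (mat_adjoint B * mat_adjoint A)" "j < dim_col (mat_adjoint B * mat_adjoint A)"
  hence i: "i < k" and j: "j < n" using assms by auto
  have "mat_adjoint (A * B) $$ (i, j) = conjugate (\<Sum>l<m. A $$ (j,l) * B $$ (l,i))"
    using assms i j by (simp add: scalar_prod_def row_def col_def atLeast0LessThan)
  also have "\<dots> = (\<Sum>l<m. conjugate (B $$ (l,i)) * conjugate (A $$ (j,l)))"
    by (simp add: sum_conjugate conjugate_dist_mul mult.commute)
  also have "\<dots> = (mat_adjoint B * mat_adjoint A) $$ (i, j)"
    using assms i j by (simp add: scalar_prod_def row_def col_def atLeast0LessThan)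
  finally show "mat_adjoint (A * B) $$ (i, j) = (mat_adjoint B * mat_adjoint A) $$ (i, j)" .
qed (insert assms, auto)

lemma adj_cscalar: fixes A :: "'a::conjugatable_field mat"
  assumes A: "A \<in> carrier_mat n m" and x: "x \<in> carrier_vec m" and y: "y \<in> carrier_vec n"
  shows "(A *\<^sub>v x) \<bullet>c y = x \<bullet>c (mat_adjoint A *\<^sub>v y)"
proof -
  have "(A *\<^sub>v x) \<bullet>c y = (\<Sum>i<n. (\<Sum>l<m. A $$ (i,l) * x $ l) * conjugate (y $ i))"
    using A x y by (simp add: scalar_prod_def row_def atLeast0LessThan)
  also have "\<dots> = (\<Sum>i<n. \<Sum>l<m. x $ l * (A $$ (i,l) * conjugate (y $ i)))"
    by (simp add: sum_distrib_left sum_distrib_right mult_ac)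
  also have "\<dots> = (\<Sum>l<m. \<Sum>i<n. x $ l * (A $$ (i,l) * conjugate (y $ i)))"
    by (rule sum.swap)
  also have "\<dots> = x \<bullet>c (mat_adjoint A *\<^sub>v y)"
    using A x y by (simp add: scalar_prod_def row_def atLeast0LessThan sum_distrib_left
        sum_conjugate conjugate_dist_mul)
  finally show ?thesis .
qed

definition nsq :: "'a::rc_field vec \<Rightarrow> real" where
  "nsq v = (\<Sum>i<dim_vec v. (norm (v $ i))^2)"

lemma cscalar_self: "v \<bullet>c v = (of_real (nsq v) :: 'a::rc_field)"
  by (simp add: scalar_prod_def nsq_def mcn atLeast0LessThan)

lemma nsq_nonneg: "nsq v \<ge> 0"
  unfolding nsq_def by (simp add: sum_nonneg)

lemma nsq_zero_iff: assumes "v \<in> carrier_vec n" shows "nsq v = 0 \<longleftrightarrow> v = 0\<^sub>v n"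
proof
  assume "nsq v = 0"
  hence "\<forall>i\<in>{..<dim_vec v}. (norm (v $ i))^2 = 0"
    unfolding nsq_def by (subst sum_nonneg_eq_0_iff[symmetric]) auto
  thus "v = 0\<^sub>v n" using assms by (intro eq_vecI) auto
qed (simp add: nsq_def)

lemma nsq_pos: assumes "v \<in> carrier_vec n" "v \<noteq> 0\<^sub>v n" shows "nsq v > 0"
  using nsq_nonneg[of v] nsq_zero_iff[OF assms(1)] assms(2) by linarith

lemma cscalar_self_0: assumes "v \<in> carrier_vec n" "v \<noteq> 0\<^sub>v n" shows "v \<bullet>c v \<noteq> (0::'a::rc_field)"
  using nsq_pos[OF assms] unfolding cscalar_self by simp

lemma herm_eig_real: fixes A :: "'a::rc_field mat"
  assumes A: "A \<in> carrier_mat n n" and h: "mat_adjoint A = A"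
    and v: "v \<in> carrier_vec n" "v \<noteq> 0\<^sub>v n" and ev: "A *\<^sub>v v = z \<cdot>\<^sub>v v"
  shows "conjugate z = z"
proof -
  have e1: "(A *\<^sub>v v) \<bullet>c v = z * (v \<bullet>c v)" unfolding ev using v by simp
  have e2: "(A *\<^sub>v v) \<bullet>c v = v \<bullet>c (A *\<^sub>v v)" using adj_cscalar[OF A v(1) v(1)] h by simp
  have e3: "v \<bullet>c (A *\<^sub>v v) = conjugate z * (v \<bullet>c v)" unfolding ev using v
    by (simp add: conjugate_smult_vec)
  have "z * (v \<bullet>c v) = conjugate z * (v \<bullet>c v)" using e1 e2 e3 by metis
  hence "z = conjugate z" using cscalar_self_0[OF v] by (metis mult_right_cancel)
  thus ?thesis by simp
qed

lemma hermitian_eigen: fixes H :: "'a::rc_field mat"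
  assumes H: "H \<in> carrier_mat n n" and h: "mat_adjoint H = H" and n: "n > 0"
  shows "\<exists>v c. v \<in> carrier_vec n \<and> v \<noteq> 0\<^sub>v n \<and> H *\<^sub>v v = of_real c \<cdot>\<^sub>v v"
proof -
  define Hc where "Hc = map_mat psi H"
  have Hc: "Hc \<in> carrier_mat n n" unfolding Hc_def using H by simp
  have hc: "mat_adjoint Hc = Hc"
  proof (rule eq_matI)
    fix i j assume "i < dim_row Hc" "j < dim_col Hc"
    hence ij: "i < n" "j < n" using Hc by auto
    have "mat_adjoint Hc $$ (i,j) = cnj (psi (H $$ (j,i)))" using ij H unfolding Hc_def by simp
    also have "\<dots> = psi (mat_adjoint H $$ (i,j))" using ij H by (simp add: psi_conj)
    also have "\<dots> = Hc $$ (i,j)" unfolding h Hc_def using ij H by simp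
    finally show "mat_adjoint Hc $$ (i,j) = Hc $$ (i,j)" .
  qed (insert Hc, auto)
  from spectrum_non_empty[OF Hc n] obtain z where "z \<in> spectrum Hc" by blast
  hence "eigenvalue Hc z" unfolding spectrum_def by simp
  then obtain vc where evc: "eigenvector Hc vc z" unfolding eigenvalue_def by blast
  hence vc: "vc \<in> carrier_vec n" "vc \<noteq> 0\<^sub>v n" "Hc *\<^sub>v vc = z \<cdot>\<^sub>v vc"
    unfolding eigenvector_def using Hc by auto
  have "conjugate z = z" by (rule herm_eig_real[OF Hc hc vc])
  hence z: "z = of_real (re z)" by (rule real_if_conj_eq)
  define t where "t = re z"
  have "poly (char_poly Hc) z = 0"
    using \<open>eigenvalue Hc z\<close> eigenvalue_root_char_poly[OF Hc] by simp
  moreover have "char_poly Hc = map_poly psi (char_poly H)"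
    unfolding Hc_def by (rule psi_hom.char_poly_hom[OF H])
  moreover have "z = psi (of_real t :: 'a)" using z unfolding t_def by (simp add: psi_of_real)
  ultimately have "psi (poly (char_poly H) (of_real t)) = psi 0"
    by (simp add: psi_zero)
  hence "poly (char_poly H) (of_real t) = 0" by (rule psi_inj)
  hence "eigenvalue H (of_real t)" using eigenvalue_root_char_poly[OF H] by simp
  then obtain v where "eigenvector H v (of_real t)" unfolding eigenvalue_def by blast
  thus ?thesis unfolding eigenvector_def using H by auto
qed

lemma sum_split_add: "(\<Sum>l<k+(m::nat). f l) = (\<Sum>l<k. f l) + (\<Sum>l<m. f (k+l))"
  by (induct m) (auto simp: algebra_simps)

lemma cscalar_swap: fixes a b :: "'a::rc_field vec"
  assumes "a \<in> carrier_vec n" "b \<in> carrier_vec n"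
  shows "b \<bullet>c a = conjugate (a \<bullet>c b)"
  using assms by (simp add: scalar_prod_def sum_conjugate conjugate_dist_mul mult.commute)

lemma adjmul_index: fixes B :: "'a::rc_field mat"
  assumes "B \<in> carrier_mat n k" "C \<in> carrier_mat n m" "i < k" "j < m"
  shows "(mat_adjoint B * C) $$ (i,j) = col C j \<bullet>c col B i"
  using assms by (simp add: scalar_prod_def row_def col_def mult.commute)

definition onm :: "'a::rc_field mat \<Rightarrow> nat \<Rightarrow> nat \<Rightarrow> bool" where
  "onm B n k \<longleftrightarrow> B \<in> carrier_mat n k \<and> mat_adjoint B * B = 1\<^sub>m k"

lemma onm_iff: fixes B :: "'a::rc_field mat"
  assumes B: "B \<in> carrier_mat n k"
  shows "onm B n k \<longleftrightarrow> (\<forall>i<k. \<forall>j<k. col B j \<bullet>c col B i = (if i = j then 1 else 0))"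
proof
  assume "onm B n k"
  hence e: "mat_adjoint B * B = 1\<^sub>m k" unfolding onm_def by auto
  show "\<forall>i<k. \<forall>j<k. col B j \<bullet>c col B i = (if i = j then 1 else 0)"
  proof (intro allI impI)
    fix i j assume "i < k" "j < k"
    thus "col B j \<bullet>c col B i = (if i = j then 1 else 0)"
      using adjmul_index[OF B B, of i j] e by simp
  qed
next
  assume h: "\<forall>i<k. \<forall>j<k. col B j \<bullet>c col B i = (if i = j then 1 else 0)"
  have "mat_adjoint B * B = 1\<^sub>m k"
  proof (rule eq_matI)
    fix i j assume "i < dim_row (1\<^sub>m k :: 'a mat)" "j < dim_col (1\<^sub>m k :: 'a mat)"
    hence ij: "i < k" "j < k" by auto
    show "(mat_adjoint B * B) $$ (i,j) = 1\<^sub>m k $$ (i,j)"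
      by (subst adjmul_index[OF B B ij]) (use h ij in auto)
  qed (use B in auto)
  thus "onm B n k" unfolding onm_def using B by auto
qed

lemma onm_carrier: "onm B n k \<Longrightarrow> B \<in> carrier_mat n k" unfolding onm_def by auto
lemma onm_id: "onm B n k \<Longrightarrow> mat_adjoint B * B = 1\<^sub>m k" unfolding onm_def by auto

lemma onm_col: assumes "onm B n k" "i < k" "j < k"
  shows "col B j \<bullet>c col B i = (if i = j then 1 else 0)"
  using assms onm_iff[OF onm_carrier[OF assms(1)]] by auto

lemma adj_zero_iff: fixes B :: "'a::rc_field mat"
  assumes B: "B \<in> carrier_mat n k" and C: "C \<in> carrier_mat n m"
  shows "mat_adjoint B * C = 0\<^sub>m k m \<longleftrightarrow> (\<forall>i<k. \<forall>j<m. col C j \<bullet>c col B i = 0)"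
proof
  assume "mat_adjoint B * C = 0\<^sub>m k m"
  thus "\<forall>i<k. \<forall>j<m. col C j \<bullet>c col B i = 0"
    using adjmul_index[OF B C] by (metis index_zero_mat(1))
next
  assume "\<forall>i<k. \<forall>j<m. col C j \<bullet>c col B i = 0"
  show "mat_adjoint B * C = 0\<^sub>m k m"
  proof (rule eq_matI)
    fix i j assume "i < dim_row (0\<^sub>m k m :: 'a mat)" "j < dim_col (0\<^sub>m k m :: 'a mat)"
    hence ij: "i < k" "j < m" by auto
    show "(mat_adjoint B * C) $$ (i,j) = 0\<^sub>m k m $$ (i,j)"
      by (subst adjmul_index[OF B C ij]) (use \<open>\<forall>i<k. \<forall>j<m. col C j \<bullet>c col B i = 0\<close> ij in auto)
  qed (use B C in auto)
qed

definition hcat :: "'a mat \<Rightarrow> 'a mat \<Rightarrow> 'a mat" where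
  "hcat B C = mat (dim_row B) (dim_col B + dim_col C)
     (\<lambda>(i,j). if j < dim_col B then B $$ (i,j) else C $$ (i, j - dim_col B))"

lemma hcat_dim_row[simp]: "dim_row (hcat B C) = dim_row B" unfolding hcat_def by simp
lemma hcat_dim_col[simp]: "dim_col (hcat B C) = dim_col B + dim_col C" unfolding hcat_def by simp

lemma hcat_carrier[simp]: "B \<in> carrier_mat n k \<Longrightarrow> C \<in> carrier_mat n m \<Longrightarrow> hcat B C \<in> carrier_mat n (k+m)"
  unfolding hcat_def by auto

lemma col_hcat1: assumes "B \<in> carrier_mat n k" "C \<in> carrier_mat n m" "j < k"
  shows "col (hcat B C) j = col B j"
  using assms unfolding hcat_def by (intro eq_vecI) auto

lemma col_hcat2: assumes "B \<in> carrier_mat n k" "C \<in> carrier_mat n m" "j < m"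
  shows "col (hcat B C) (k + j) = col C j"
  using assms unfolding hcat_def by (intro eq_vecI) auto

lemma col_hcat: assumes "B \<in> carrier_mat n k" "C \<in> carrier_mat n m" "j < k + m"
  shows "col (hcat B C) j = (if j < k then col B j else col C (j - k))"
  using col_hcat1[OF assms(1,2)] col_hcat2[OF assms(1,2), of "j - k"] assms(3) by auto

lemma onm_hcat: fixes B :: "'a::rc_field mat"
  assumes B: "onm B n k" and C: "onm C n m" and BC: "mat_adjoint B * C = 0\<^sub>m k m"
  shows "onm (hcat B C) n (k+m)"
proof -
  have Bc: "B \<in> carrier_mat n k" and Cc: "C \<in> carrier_mat n m" using B C onm_carrier by auto
  have z: "\<And>i j. i < k \<Longrightarrow> j < m \<Longrightarrow> col C j \<bullet>c col B i = 0" using BC adj_zero_iff[OF Bc Cc] by auto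
  have z2: "\<And>i j. i < k \<Longrightarrow> j < m \<Longrightarrow> col B i \<bullet>c col C j = 0"
    using z cscalar_swap[of "col C _" n "col B _"] Bc Cc by (metis carrier_matD col_dim conjugate_zero)
  show ?thesis unfolding onm_iff[OF hcat_carrier[OF Bc Cc]]
  proof (intro allI impI)
    fix i j assume i: "i < k + m" and j: "j < k + m"
    show "col (hcat B C) j \<bullet>c col (hcat B C) i = (if i = j then 1 else 0)"
    proof (cases "i < k")
      case True note ik = this
      show ?thesis
      proof (cases "j < k")
        case True
        thus ?thesis using ik col_hcat[OF Bc Cc i] col_hcat[OF Bc Cc j] onm_col[OF B ik True] by simp
      next
        case False
        hence "j - k < m" "i \<noteq> j" using j ik by auto
        thus ?thesis using ik False col_hcat[OF Bc Cc i] col_hcat[OF Bc Cc j] z[OF ik] by simp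
      qed
    next
      case False note ik = this
      hence ik': "i - k < m" using i by simp
      show ?thesis
      proof (cases "j < k")
        case True
        hence "i \<noteq> j" using ik by auto
        thus ?thesis using ik True col_hcat[OF Bc Cc i] col_hcat[OF Bc Cc j] z2[OF True ik'] by simp
      next
        case False
        hence jk': "j - k < m" using j by simp
        have "(i - k = j - k) = (i = j)" using False ik by auto
        thus ?thesis using ik False col_hcat[OF Bc Cc i] col_hcat[OF Bc Cc j] onm_col[OF C ik' jk'] by simp
      qed
    qed
  qed
qed

lemma hcat_mult_adj: fixes B :: "'a::rc_field mat"
  assumes B: "B \<in> carrier_mat n k" and C: "C \<in> carrier_mat n m"
  shows "hcat B C * mat_adjoint (hcat B C) = B * mat_adjoint B + C * mat_adjoint C"
proof (rule eq_matI)
  fix i j assume "i < dim_row (B * mat_adjoint B + C * mat_adjoint C)" "j < dim_col (B * mat_adjoint B + C * mat_adjoint C)"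
  hence i: "i < n" and j: "j < n" using B C by auto
  have dB: "dim_row B = n" "dim_col B = k" and dC: "dim_row C = n" "dim_col C = m" using B C by auto
  have "(hcat B C * mat_adjoint (hcat B C)) $$ (i,j) = (\<Sum>l<k+m. hcat B C $$ (i,l) * conjugate (hcat B C $$ (j,l)))"
    using dB dC i j by (simp add: scalar_prod_def atLeast0LessThan)
  also have "\<dots> = (\<Sum>l<k. B $$ (i,l) * conjugate (B $$ (j,l))) + (\<Sum>l<m. C $$ (i,l) * conjugate (C $$ (j,l)))"
    unfolding sum_split_add using B C i j unfolding hcat_def by simp
  also have "\<dots> = (B * mat_adjoint B + C * mat_adjoint C) $$ (i,j)"
    using B C i j by (simp add: scalar_prod_def row_def col_def atLeast0LessThan)
  finally show "(hcat B C * mat_adjoint (hcat B C)) $$ (i,j) = (B * mat_adjoint B + C * mat_adjoint C) $$ (i,j)" .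
qed (insert B C, auto)

definition colmat :: "'a vec \<Rightarrow> 'a mat" where
  "colmat x = mat (dim_vec x) 1 (\<lambda>(i,j). x $ i)"

lemma colmat_carrier[simp]: "x \<in> carrier_vec n \<Longrightarrow> colmat x \<in> carrier_mat n 1"
  unfolding colmat_def by auto

lemma col_colmat[simp]: "col (colmat x) 0 = x"
  unfolding colmat_def by (intro eq_vecI) auto

lemma onm_colmat: assumes "x \<in> carrier_vec n" "x \<bullet>c x = (1::'a::rc_field)"
  shows "onm (colmat x) n 1"
  using onm_iff[OF colmat_carrier[OF assms(1)]] assms by auto

lemma adj_colmat_zero: fixes B :: "'a::rc_field mat"
  assumes B: "B \<in> carrier_mat n k" and x: "x \<in> carrier_vec n" and z: "mat_adjoint B *\<^sub>v x = 0\<^sub>v k"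
  shows "mat_adjoint B * colmat x = 0\<^sub>m k 1"
proof -
  have "\<forall>i<k. \<forall>j<1. col (colmat x) j \<bullet>c col B i = 0"
  proof (intro allI impI)
    fix i j :: nat assume i: "i < k" and "j < 1"
    hence j: "j = 0" by simp
    have "(mat_adjoint B *\<^sub>v x) $ i = x \<bullet>c col B i"
      using B x i by (simp add: scalar_prod_def row_def col_def mult.commute)
    thus "col (colmat x) j \<bullet>c col B i = 0" using z i j by simp
  qed
  thus ?thesis using adj_zero_iff[OF B colmat_carrier[OF x]] by simp
qed

lemma mult_mat_vec_in_range: "B \<in> carrier_mat n k \<Longrightarrow> x \<in> carrier_vec k \<Longrightarrow> B *\<^sub>v x \<in> mat_range B"
  unfolding mat_range_def by auto

lemma not_all_in_range: fixes B :: "'a::rc_field mat"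
  assumes B: "B \<in> carrier_mat n k" and k: "k < n"
  shows "\<exists>e \<in> carrier_vec n. e \<notin> mat_range B"
proof (rule ccontr)
  assume "\<not> ?thesis"
  hence all: "\<forall>e \<in> carrier_vec n. e \<in> mat_range B" by blast
  interpret vs: vec_space "TYPE('a)" n .
  have cs: "vs.col_space B = carrier_vec n"
    unfolding vs.col_space_eq[OF B] using all B unfolding mat_range_def by auto
  have sc: "set (cols B) \<subseteq> carrier_vec n" using B by (auto simp: cols_def)
  have "card (set (cols B)) \<ge> vs.dim"
    by (rule vs.gen_ge_dim, insert sc cs, auto simp: vs.col_space_def)
  hence "card (set (cols B)) \<ge> n" using vs.dim_is_n by simp
  moreover have "card (set (cols B)) \<le> k" using card_length[of "cols B"] B by simp
  ultimately show False using k by simp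
qed

lemma normalize_unit: fixes v :: "'a::rc_field vec"
  assumes v: "v \<in> carrier_vec n" "v \<noteq> 0\<^sub>v n"
  defines "a \<equiv> 1 / sqrt (nsq v)"
  shows "(of_real a \<cdot>\<^sub>v v) \<bullet>c (of_real a \<cdot>\<^sub>v v) = 1"
proof -
  have s: "nsq v > 0" using nsq_pos[OF v] .
  have "(of_real a \<cdot>\<^sub>v v) \<bullet>c (of_real a \<cdot>\<^sub>v v) = (of_real a \<cdot>\<^sub>v v) \<bullet> (of_real a \<cdot>\<^sub>v conjugate v)"
    by (simp add: conjugate_smult_vec)
  also have "\<dots> = of_real a * (of_real a * (v \<bullet>c v))" using v by simp
  also have "\<dots> = of_real (a * a * nsq v)" unfolding cscalar_self by simp
  also have "a * a * nsq v = 1" unfolding a_def using s by (simp add: real_sqrt_mult[symmetric])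
  finally show ?thesis by simp
qed

lemma smult_zero_vec': "(a::'a::semiring_0) \<cdot>\<^sub>v 0\<^sub>v k = 0\<^sub>v k"
  by (intro eq_vecI) auto

lemma mult_zero_vec': "A \<in> carrier_mat n k \<Longrightarrow> A *\<^sub>v 0\<^sub>v k = (0\<^sub>v n :: 'a::semiring_0 vec)"
  by (intro eq_vecI) (auto simp: scalar_prod_def)

lemma ext_one: fixes B :: "'a::rc_field mat"
  assumes B: "onm B n k" and k: "k < n"
  shows "\<exists>u \<in> carrier_vec n. u \<bullet>c u = 1 \<and> mat_adjoint B *\<^sub>v u = 0\<^sub>v k"
proof -
  have Bc: "B \<in> carrier_mat n k" using onm_carrier[OF B] .
  have BHc: "mat_adjoint B \<in> carrier_mat k n" using Bc by simp
  obtain e where e: "e \<in> carrier_vec n" "e \<notin> mat_range B" using not_all_in_range[OF Bc k] by blast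
  define c where "c = mat_adjoint B *\<^sub>v e"
  have cc: "c \<in> carrier_vec k" unfolding c_def using BHc e(1) by simp
  define w where "w = B *\<^sub>v c"
  have wc: "w \<in> carrier_vec n" unfolding w_def using Bc cc by simp
  define u' where "u' = e - w"
  have u'c: "u' \<in> carrier_vec n" unfolding u'_def using wc e(1) by simp
  have "mat_adjoint B *\<^sub>v u' = mat_adjoint B *\<^sub>v e - mat_adjoint B *\<^sub>v w"
    unfolding u'_def by (rule mult_minus_distrib_mat_vec[OF BHc e(1) wc])
  also have "mat_adjoint B *\<^sub>v w = (mat_adjoint B * B) *\<^sub>v c"
    unfolding w_def by (rule assoc_mult_mat_vec[symmetric, OF BHc Bc cc])
  also have "\<dots> = c" unfolding onm_id[OF B] using cc by simp
  also have "mat_adjoint B *\<^sub>v e - c = 0\<^sub>v k" unfolding c_def by (rule minus_cancel_vec, use BHc e(1) in simp)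
  finally have z: "mat_adjoint B *\<^sub>v u' = 0\<^sub>v k" .
  have u'0: "u' \<noteq> 0\<^sub>v n"
  proof
    assume u0: "u' = 0\<^sub>v n"
    have "e = w"
    proof (rule eq_vecI)
      fix i assume "i < dim_vec w"
      hence i: "i < n" using wc by simp
      have "u' $ i = 0" using u0 i by simp
      thus "e $ i = w $ i" unfolding u'_def using i wc by simp
    qed (use e wc in simp)
    hence "e \<in> mat_range B" unfolding w_def using mult_mat_vec_in_range[OF Bc cc] by simp
    thus False using e by simp
  qed
  define a where "a = 1 / sqrt (nsq u')"
  define u where "u = (of_real a :: 'a) \<cdot>\<^sub>v u'"
  have uc: "u \<in> carrier_vec n" unfolding u_def using u'c by simp
  have u1: "u \<bullet>c u = 1" unfolding u_def a_def by (rule normalize_unit[OF u'c u'0])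
  have "mat_adjoint B *\<^sub>v u = of_real a \<cdot>\<^sub>v (mat_adjoint B *\<^sub>v u')" unfolding u_def
    by (rule mult_mat_vec[OF BHc u'c])
  also have "\<dots> = 0\<^sub>v k" unfolding z by (rule smult_zero_vec')
  finally show ?thesis using uc u1 by blast
qed

lemma zero_mult_vec: "v \<in> carrier_vec m \<Longrightarrow> 0\<^sub>m k m *\<^sub>v v = (0\<^sub>v k :: 'a::semiring_0 vec)"
  by (intro eq_vecI) (auto simp: scalar_prod_def)

lemma adj_mult_vec_index: fixes B :: "'a::rc_field mat"
  assumes "B \<in> carrier_mat n k" "x \<in> carrier_vec n" "i < k"
  shows "(mat_adjoint B *\<^sub>v x) $ i = x \<bullet>c col B i"
  using assms by (simp add: scalar_prod_def row_def col_def mult.commute)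

lemma zero_mat_n0_onm: "onm (0\<^sub>m n 0 :: 'a::rc_field mat) n 0"
proof -
  have "mat_adjoint (0\<^sub>m n 0 :: 'a mat) * 0\<^sub>m n 0 = 1\<^sub>m 0" by (rule eq_matI) auto
  thus ?thesis unfolding onm_def by simp
qed

lemma ext_onm: fixes B :: "'a::rc_field mat"
  assumes B: "onm B n k"
  shows "k + m \<le> n \<Longrightarrow> \<exists>C. onm C n m \<and> mat_adjoint B * C = 0\<^sub>m k m"
proof (induct m)
  case 0
  have "mat_adjoint B * 0\<^sub>m n 0 = 0\<^sub>m k 0" using onm_carrier[OF B] by (intro eq_matI) auto
  thus ?case using zero_mat_n0_onm by blast
next
  case (Suc m)
  then obtain C where C: "onm C n m" and BC: "mat_adjoint B * C = 0\<^sub>m k m" by auto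
  have Bc: "B \<in> carrier_mat n k" and Cc: "C \<in> carrier_mat n m" using B C onm_carrier by auto
  have W: "onm (hcat B C) n (k+m)" by (rule onm_hcat[OF B C BC])
  have Wc: "hcat B C \<in> carrier_mat n (k+m)" using Bc Cc by simp
  from ext_one[OF W] Suc(2) obtain u where u: "u \<in> carrier_vec n" "u \<bullet>c u = 1"
    and Wu: "mat_adjoint (hcat B C) *\<^sub>v u = 0\<^sub>v (k+m)" by auto
  have Bu: "\<And>i. i < k \<Longrightarrow> u \<bullet>c col B i = 0"
  proof -
    fix i assume i: "i < k"
    have "(mat_adjoint (hcat B C) *\<^sub>v u) $ i = u \<bullet>c col (hcat B C) i"
      by (rule adj_mult_vec_index[OF Wc u(1)], use i in simp)
    thus "u \<bullet>c col B i = 0" using Wu i col_hcat1[OF Bc Cc i] by simp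
  qed
  have Cu: "\<And>i. i < m \<Longrightarrow> u \<bullet>c col C i = 0"
  proof -
    fix i assume i: "i < m"
    have "(mat_adjoint (hcat B C) *\<^sub>v u) $ (k+i) = u \<bullet>c col (hcat B C) (k+i)"
      by (rule adj_mult_vec_index[OF Wc u(1)], use i in simp)
    thus "u \<bullet>c col C i = 0" using Wu i col_hcat2[OF Bc Cc i] by simp
  qed
  have Cu0: "mat_adjoint C *\<^sub>v u = 0\<^sub>v m"
  proof (rule eq_vecI)
    fix i assume "i < dim_vec (0\<^sub>v m :: 'a vec)"
    hence i: "i < m" by simp
    show "(mat_adjoint C *\<^sub>v u) $ i = 0\<^sub>v m $ i"
      by (subst adj_mult_vec_index[OF Cc u(1) i]) (use Cu i in simp)
  qed (use Cc in simp)
  define C' where "C' = hcat C (colmat u)"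
  have C'c: "C' \<in> carrier_mat n (m + 1)" unfolding C'_def using hcat_carrier[OF Cc colmat_carrier[OF u(1)]] .
  have "onm C' n (m+1)" unfolding C'_def
    by (rule onm_hcat[OF C onm_colmat[OF u] adj_colmat_zero[OF Cc u(1) Cu0]])
  moreover have "mat_adjoint B * C' = 0\<^sub>m k (m+1)"
    unfolding adj_zero_iff[OF Bc C'c]
  proof (intro allI impI)
    fix i j assume i: "i < k" and j: "j < m + 1"
    show "col C' j \<bullet>c col B i = 0"
    proof (cases "j < m")
      case True
      thus ?thesis unfolding C'_def using col_hcat1[OF Cc colmat_carrier[OF u(1)] True]
        BC adj_zero_iff[OF Bc Cc] i by auto
    next
      case False
      hence "j = m + 0" using j by simp
      hence "col C' j = u" unfolding C'_def using col_hcat2[OF Cc colmat_carrier[OF u(1)], of 0] by simp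
      thus ?thesis using Bu[OF i] by simp
    qed
  qed
  ultimately show ?case by auto
qed

lemma spectral_partial: fixes H :: "'a::rc_field mat"
  assumes H: "H \<in> carrier_mat n n" and h: "mat_adjoint H = H"
  shows "k \<le> n \<Longrightarrow> \<exists>B d. onm B n k \<and> (\<forall>j<k. H *\<^sub>v col B j = of_real (d j) \<cdot>\<^sub>v col B j)"
proof (induct k)
  case 0
  show ?case using zero_mat_n0_onm by blast
next
  case (Suc k)
  then obtain B d where B: "onm B n k" and Bev: "\<forall>j<k. H *\<^sub>v col B j = of_real (d j) \<cdot>\<^sub>v col B j" by auto
  have k: "k < n" using Suc by simp
  obtain C where C: "onm C n (n-k)" and BC: "mat_adjoint B * C = 0\<^sub>m k (n-k)"
    using ext_onm[OF B, of "n-k"] k by auto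
  have Bc: "B \<in> carrier_mat n k" and Cc: "C \<in> carrier_mat n (n-k)" using B C onm_carrier by auto
  define H' where "H' = mat_adjoint C * H * C"
  have H'c: "H' \<in> carrier_mat (n-k) (n-k)" unfolding H'_def using Cc H by (metis adj_carrier mult_carrier_mat)
  have CHc: "mat_adjoint C * H \<in> carrier_mat (n-k) n" using Cc H by (metis adj_carrier mult_carrier_mat)
  have h': "mat_adjoint H' = H'"
  proof -
    have "mat_adjoint H' = mat_adjoint C * mat_adjoint (mat_adjoint C * H)"
      unfolding H'_def by (rule adj_mult[OF CHc Cc])
    also have "mat_adjoint (mat_adjoint C * H) = mat_adjoint H * mat_adjoint (mat_adjoint C)"
      by (rule adj_mult[OF adj_carrier[OF Cc] H])
    also have "\<dots> = H * C" using h by simp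
    also have "mat_adjoint C * (H * C) = H'" unfolding H'_def
      by (rule assoc_mult_mat[symmetric, OF adj_carrier[OF Cc] H Cc])
    finally show ?thesis .
  qed
  obtain y c where y: "y \<in> carrier_vec (n-k)" "y \<noteq> 0\<^sub>v (n-k)" and ey: "H' *\<^sub>v y = of_real c \<cdot>\<^sub>v y"
    using hermitian_eigen[OF H'c h'] k by auto
  define a where "a = 1 / sqrt (nsq y)"
  define y1 where "y1 = (of_real a :: 'a) \<cdot>\<^sub>v y"
  have y1c: "y1 \<in> carrier_vec (n-k)" unfolding y1_def using y by simp
  have y11: "y1 \<bullet>c y1 = 1" unfolding y1_def a_def by (rule normalize_unit[OF y])
  have "H' *\<^sub>v y1 = of_real a \<cdot>\<^sub>v (H' *\<^sub>v y)" unfolding y1_def by (rule mult_mat_vec[OF H'c y(1)])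
  also have "\<dots> = of_real c \<cdot>\<^sub>v y1" unfolding ey y1_def by (simp add: smult_smult_assoc mult.commute)
  finally have ey1: "H' *\<^sub>v y1 = of_real c \<cdot>\<^sub>v y1" .
  define x where "x = C *\<^sub>v y1"
  have xc: "x \<in> carrier_vec n" unfolding x_def using Cc y1c by simp
  have "x \<bullet>c x = y1 \<bullet>c (mat_adjoint C *\<^sub>v (C *\<^sub>v y1))"
    unfolding x_def by (rule adj_cscalar[OF Cc y1c], use Cc y1c in simp)
  also have "mat_adjoint C *\<^sub>v (C *\<^sub>v y1) = (mat_adjoint C * C) *\<^sub>v y1"
    by (rule assoc_mult_mat_vec[symmetric, OF adj_carrier[OF Cc] Cc y1c])
  also have "\<dots> = y1" unfolding onm_id[OF C] using y1c by simp
  finally have x1: "x \<bullet>c x = 1" using y11 by simp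
  have Bx: "mat_adjoint B *\<^sub>v x = 0\<^sub>v k"
  proof -
    have "mat_adjoint B *\<^sub>v x = (mat_adjoint B * C) *\<^sub>v y1"
      unfolding x_def using Bc Cc y1c by (simp add: assoc_mult_mat_vec[of _ k n _ "n-k"])
    thus ?thesis unfolding BC using zero_mult_vec[OF y1c] by simp
  qed
  have xB: "x \<bullet>c col B i = 0" if i: "i < k" for i
  proof -
    have "(mat_adjoint B *\<^sub>v x) $ i = x \<bullet>c col B i" by (rule adj_mult_vec_index[OF Bc xc i])
    thus ?thesis unfolding Bx using i by simp
  qed
  define W where "W = hcat B C"
  have Wc: "W \<in> carrier_mat n n" unfolding W_def using Bc Cc k hcat_carrier[OF Bc Cc] by simp
  have "onm W n (k + (n-k))" unfolding W_def by (rule onm_hcat[OF B C BC])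
  hence "mat_adjoint W * W = 1\<^sub>m (k + (n-k))" by (rule onm_id)
  hence "mat_adjoint W * W = 1\<^sub>m n" using k by simp
  hence "W * mat_adjoint W = 1\<^sub>m n" by (rule mat_mult_left_right_inverse[OF adj_carrier[OF Wc] Wc])
  hence compl: "B * mat_adjoint B + C * mat_adjoint C = 1\<^sub>m n"
    unfolding W_def hcat_mult_adj[OF Bc Cc] .
  have Hxc: "H *\<^sub>v x \<in> carrier_vec n" using H xc by simp
  have BHx: "mat_adjoint B *\<^sub>v (H *\<^sub>v x) = 0\<^sub>v k"
  proof (rule eq_vecI)
    fix i assume "i < dim_vec (0\<^sub>v k :: 'a vec)"
    hence i: "i < k" by simp
    have cBi: "col B i \<in> carrier_vec n" using Bc i by simp
    have "(mat_adjoint B *\<^sub>v (H *\<^sub>v x)) $ i = (H *\<^sub>v x) \<bullet>c col B i"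
      by (rule adj_mult_vec_index[OF Bc Hxc i])
    also have "\<dots> = x \<bullet>c (H *\<^sub>v col B i)" using adj_cscalar[OF H xc cBi] h by simp
    also have "\<dots> = x \<bullet>c (of_real (d i) \<cdot>\<^sub>v col B i)" using Bev i by simp
    also have "\<dots> = of_real (d i) * (x \<bullet>c col B i)" using xc cBi by (simp add: conjugate_smult_vec)
    also have "\<dots> = 0" using xB[OF i] by simp
    finally show "(mat_adjoint B *\<^sub>v (H *\<^sub>v x)) $ i = 0\<^sub>v k $ i" using i by simp
  qed (insert Bc, simp)
  have CHx: "mat_adjoint C *\<^sub>v (H *\<^sub>v x) = of_real c \<cdot>\<^sub>v y1"
  proof -
    have "H' *\<^sub>v y1 = (mat_adjoint C * H) *\<^sub>v (C *\<^sub>v y1)" unfolding H'_def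
      by (rule assoc_mult_mat_vec[OF CHc Cc y1c])
    also have "\<dots> = mat_adjoint C *\<^sub>v (H *\<^sub>v (C *\<^sub>v y1))"
      by (rule assoc_mult_mat_vec[OF adj_carrier[OF Cc] H], use Cc y1c in simp)
    finally have "mat_adjoint C *\<^sub>v (H *\<^sub>v x) = H' *\<^sub>v y1" unfolding x_def by simp
    thus ?thesis using ey1 by simp
  qed
  have Hx: "H *\<^sub>v x = of_real c \<cdot>\<^sub>v x"
  proof -
    have "H *\<^sub>v x = (B * mat_adjoint B + C * mat_adjoint C) *\<^sub>v (H *\<^sub>v x)" unfolding compl using Hxc by simp
    also have "\<dots> = (B * mat_adjoint B) *\<^sub>v (H *\<^sub>v x) + (C * mat_adjoint C) *\<^sub>v (H *\<^sub>v x)"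
      by (rule add_mult_distrib_mat_vec[OF _ _ Hxc], use Bc Cc in auto)
    also have "(B * mat_adjoint B) *\<^sub>v (H *\<^sub>v x) = B *\<^sub>v (mat_adjoint B *\<^sub>v (H *\<^sub>v x))"
      by (rule assoc_mult_mat_vec[OF Bc adj_carrier[OF Bc] Hxc])
    also have "(C * mat_adjoint C) *\<^sub>v (H *\<^sub>v x) = C *\<^sub>v (mat_adjoint C *\<^sub>v (H *\<^sub>v x))"
      by (rule assoc_mult_mat_vec[OF Cc adj_carrier[OF Cc] Hxc])
    also have "C *\<^sub>v (mat_adjoint C *\<^sub>v (H *\<^sub>v x)) = of_real c \<cdot>\<^sub>v x"
      unfolding CHx unfolding x_def by (rule mult_mat_vec[OF Cc y1c])
    also have "B *\<^sub>v (mat_adjoint B *\<^sub>v (H *\<^sub>v x)) = 0\<^sub>v n" unfolding BHx using Bc by (rule mult_zero_vec')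
    also have "0\<^sub>v n + of_real c \<cdot>\<^sub>v x = of_real c \<cdot>\<^sub>v x" using xc by simp
    finally show ?thesis .
  qed
  define B' where "B' = hcat B (colmat x)"
  define d' where "d' = d(k := c)"
  have "onm B' n (k+1)" unfolding B'_def
    by (rule onm_hcat[OF B onm_colmat[OF xc x1] adj_colmat_zero[OF Bc xc Bx]])
  moreover have "\<forall>j<Suc k. H *\<^sub>v col B' j = of_real (d' j) \<cdot>\<^sub>v col B' j"
  proof (intro allI impI)
    fix j assume j: "j < Suc k"
    show "H *\<^sub>v col B' j = of_real (d' j) \<cdot>\<^sub>v col B' j"
    proof (cases "j < k")
      case True
      thus ?thesis unfolding B'_def d'_def using col_hcat1[OF Bc colmat_carrier[OF xc] True] Bev by simp
    next
      case False
      hence jk: "j = k + 0" using j by simp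
      hence "col B' j = x" unfolding B'_def using col_hcat2[OF Bc colmat_carrier[OF xc], of 0] by simp
      thus ?thesis using Hx jk unfolding d'_def by simp
    qed
  qed
  ultimately show ?case by auto
qed

lemma spectral: fixes H :: "'a::rc_field mat"
  assumes H: "H \<in> carrier_mat n n" and h: "mat_adjoint H = H"
  shows "\<exists>U d. onm U n n \<and> (\<forall>j<n. H *\<^sub>v col U j = of_real (d j) \<cdot>\<^sub>v col U j)"
  using spectral_partial[OF H h, of n] by simp

lemma kernel_orth: fixes M :: "'a::rc_field mat"
  assumes M: "M \<in> carrier_mat n p" and p: "p < n"
  shows "\<exists>u \<in> carrier_vec n. u \<bullet>c u = 1 \<and> (\<forall>i<p. u \<bullet>c col M i = 0)"
proof -
  define c where "c = (\<lambda>i. if i < p then conjugate (col M i) else 0\<^sub>v n)"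
  define A where "A = mat\<^sub>r n n (\<lambda>i. if i = n - 1 then 0\<^sub>v n else c i)"
  have cc: "c \<in> {0..<n} \<rightarrow> carrier_vec n" unfolding c_def using M by auto
  have "det A = 0" unfolding A_def by (rule det_row_0[OF _ cc], use p in simp)
  moreover have A: "A \<in> carrier_mat n n" unfolding A_def by simp
  ultimately obtain v where v: "v \<in> carrier_vec n" "v \<noteq> 0\<^sub>v n" "A *\<^sub>v v = 0\<^sub>v n"
    using det_0_iff_vec_prod_zero_field[OF A] by auto
  have vM: "v \<bullet>c col M i = 0" if i: "i < p" for i
  proof -
    have i': "i < n" "i \<noteq> n - 1" using i p by auto
    have "(A *\<^sub>v v) $ i = row A i \<bullet> v" using i' A by simp
    also have "row A i = conjugate (col M i)" unfolding A_def using i' i M by (simp add: c_def)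
    finally have "conjugate (col M i) \<bullet> v = 0" using v(3) i' by simp
    thus ?thesis using comm_scalar_prod[of v n "conjugate (col M i)"] v(1) M i by simp
  qed
  define a where "a = 1 / sqrt (nsq v)"
  define u where "u = (of_real a :: 'a) \<cdot>\<^sub>v v"
  have uc: "u \<in> carrier_vec n" unfolding u_def using v by simp
  have u1: "u \<bullet>c u = 1" unfolding u_def a_def by (rule normalize_unit[OF v(1,2)])
  have "u \<bullet>c col M i = 0" if i: "i < p" for i
    unfolding u_def using vM[OF i] v(1) M by simp
  thus ?thesis using uc u1 by blast
qed

lemma nsq_diff: fixes a b :: "'a::rc_field vec"
  assumes "a \<in> carrier_vec n" "b \<in> carrier_vec n"
  shows "nsq (a - b) = nsq a + nsq b - 2 * re (a \<bullet>c b)"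
proof -
  have "nsq (a - b) = (\<Sum>i<n. (norm (a $ i - b $ i))^2)" unfolding nsq_def using assms by simp
  also have "\<dots> = (\<Sum>i<n. (norm (a $ i))^2 + (norm (b $ i))^2 - 2 * re (a $ i * conjugate (b $ i)))"
    by (simp add: norm_diff_sq)
  also have "\<dots> = nsq a + nsq b - 2 * re (a \<bullet>c b)"
    unfolding nsq_def scalar_prod_def using assms
    by (simp add: sum.distrib sum_subtractf sum_distrib_left re_sum atLeast0LessThan)
  finally show ?thesis .
qed

lemma nsq_eq_cscalar: fixes a b :: "'a::rc_field vec"
  assumes "a \<bullet>c a = b \<bullet>c b" shows "nsq a = nsq b"
  using assms unfolding cscalar_self by simp

lemma re_cscalar_le: fixes a b :: "'a::rc_field vec"
  assumes "a \<in> carrier_vec n" "b \<in> carrier_vec n"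
  shows "2 * re (a \<bullet>c b) \<le> nsq a + nsq b"
  using nsq_diff[OF assms] nsq_nonneg[of "a - b"] by linarith

lemma onm_isometry: fixes U :: "'a::rc_field mat"
  assumes U: "onm U n k" and x: "x \<in> carrier_vec k"
  shows "nsq (U *\<^sub>v x) = nsq x"
proof (rule nsq_eq_cscalar)
  have Uc: "U \<in> carrier_mat n k" using onm_carrier[OF U] .
  have "(U *\<^sub>v x) \<bullet>c (U *\<^sub>v x) = x \<bullet>c (mat_adjoint U *\<^sub>v (U *\<^sub>v x))"
    by (rule adj_cscalar[OF Uc x], use Uc x in simp)
  also have "mat_adjoint U *\<^sub>v (U *\<^sub>v x) = (mat_adjoint U * U) *\<^sub>v x"
    by (rule assoc_mult_mat_vec[symmetric, OF adj_carrier[OF Uc] Uc x])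
  also have "\<dots> = x" unfolding onm_id[OF U] using x by simp
  finally show "(U *\<^sub>v x) \<bullet>c (U *\<^sub>v x) = x \<bullet>c x" .
qed

lemma onm_square_inv: fixes U :: "'a::rc_field mat"
  assumes U: "onm U n n" shows "U * mat_adjoint U = 1\<^sub>m n"
  by (rule mat_mult_left_right_inverse[OF adj_carrier[OF onm_carrier[OF U]] onm_carrier[OF U] onm_id[OF U]])

lemma ortho_Q: fixes c :: "nat \<Rightarrow> 'a::rc_field vec"
  assumes cc: "\<And>m. m < r \<Longrightarrow> c m \<in> carrier_vec n"
    and orth: "\<And>i j. i < r \<Longrightarrow> j < r \<Longrightarrow> i \<noteq> j \<Longrightarrow> c j \<bullet>c c i = 0"
    and rn: "r \<le> n"
  shows "k \<le> r \<Longrightarrow> \<exists>Q. onm Q n k \<and> (\<forall>m<k. c m = of_real (sqrt (nsq (c m))) \<cdot>\<^sub>v col Q m)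
            \<and> (\<forall>m<k. \<forall>l. k \<le> l \<and> l < r \<longrightarrow> c l \<bullet>c col Q m = 0)"
proof (induct k)
  case 0
  show ?case using zero_mat_n0_onm by blast
next
  case (Suc k)
  then obtain Q where Q: "onm Q n k" and Qc: "\<forall>m<k. c m = of_real (sqrt (nsq (c m))) \<cdot>\<^sub>v col Q m"
    and Qo: "\<forall>m<k. \<forall>l. k \<le> l \<and> l < r \<longrightarrow> c l \<bullet>c col Q m = 0" by auto
  have k: "k < r" using Suc by simp
  have Qcar: "Q \<in> carrier_mat n k" using onm_carrier[OF Q] .
  have ckc: "c k \<in> carrier_vec n" using cc k by simp
  obtain u where uc: "u \<in> carrier_vec n" and u1: "u \<bullet>c u = 1"
    and uQ: "\<forall>m<k. u \<bullet>c col Q m = 0" and uf: "\<forall>l. k < l \<and> l < r \<longrightarrow> c l \<bullet>c u = 0"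
    and uk: "c k = of_real (sqrt (nsq (c k))) \<cdot>\<^sub>v u"
  proof (cases "c k = 0\<^sub>v n")
    case True
    define F where "F = mat n (r - k - 1) (\<lambda>(i,l). c (k + 1 + l) $ i)"
    have Fc: "F \<in> carrier_mat n (r - k - 1)" unfolding F_def by simp
    have colF: "col F l = c (k + 1 + l)" if "l < r - k - 1" for l
    proof -
      have "k + 1 + l < r" using that by simp
      hence "c (k + 1 + l) \<in> carrier_vec n" using cc by simp
      thus ?thesis unfolding F_def using that by (intro eq_vecI) auto
    qed
    have "k + (r - k - 1) < n" using k rn by simp
    from kernel_orth[OF hcat_carrier[OF Qcar Fc] this] obtain u where uc: "u \<in> carrier_vec n"
      and u1: "u \<bullet>c u = 1" and uo: "\<forall>i<k + (r - k - 1). u \<bullet>c col (hcat Q F) i = 0" by auto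
    show ?thesis
    proof (rule that[OF uc u1])
      show "\<forall>m<k. u \<bullet>c col Q m = 0"
      proof (intro allI impI)
        fix m assume m: "m < k"
        have "u \<bullet>c col (hcat Q F) m = 0" using uo m by simp
        thus "u \<bullet>c col Q m = 0" using col_hcat1[OF Qcar Fc m] by simp
      qed
      show "\<forall>l. k < l \<and> l < r \<longrightarrow> c l \<bullet>c u = 0"
      proof (intro allI impI)
        fix l assume l: "k < l \<and> l < r"
        define l' where "l' = l - k - 1"
        have l': "l' < r - k - 1" "l = k + 1 + l'" using l unfolding l'_def by auto
        have "u \<bullet>c col (hcat Q F) (k + l') = 0" using uo l' by auto
        hence "u \<bullet>c c l = 0" using col_hcat2[OF Qcar Fc l'(1)] colF[OF l'(1)] l'(2) by simp
        thus "c l \<bullet>c u = 0" using cscalar_swap[OF uc cc[of l]] l by simp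
      qed
      show "c k = of_real (sqrt (nsq (c k))) \<cdot>\<^sub>v u" using True uc by (simp add: nsq_def, intro eq_vecI, auto)
    qed
  next
    case False
    define a where "a = 1 / sqrt (nsq (c k))"
    define u where "u = (of_real a :: 'a) \<cdot>\<^sub>v c k"
    have s: "nsq (c k) > 0" using nsq_pos[OF ckc False] .
    show ?thesis
    proof (rule that)
      show uc: "u \<in> carrier_vec n" unfolding u_def using ckc by simp
      show "u \<bullet>c u = 1" unfolding u_def a_def by (rule normalize_unit[OF ckc False])
      show "\<forall>m<k. u \<bullet>c col Q m = 0" unfolding u_def using Qo ckc Qcar k by auto
      show "\<forall>l. k < l \<and> l < r \<longrightarrow> c l \<bullet>c u = 0"
      proof (intro allI impI)
        fix l assume l: "k < l \<and> l < r"
        have cl: "c l \<in> carrier_vec n" using cc l by simp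
        have "c l \<bullet>c u = of_real a * (c l \<bullet>c c k)" unfolding u_def using cl ckc
          by (simp add: conjugate_smult_vec)
        also have "c l \<bullet>c c k = 0" using orth[of k l] l by simp
        finally show "c l \<bullet>c u = 0" by simp
      qed
      have "of_real (sqrt (nsq (c k))) \<cdot>\<^sub>v u = (of_real (sqrt (nsq (c k))) * of_real a) \<cdot>\<^sub>v c k"
        unfolding u_def by (simp add: smult_smult_assoc)
      also have "(of_real (sqrt (nsq (c k))) * of_real a :: 'a) = 1"
        unfolding a_def using s by (simp flip: of_real_mult)
      finally show "c k = of_real (sqrt (nsq (c k))) \<cdot>\<^sub>v u" by simp
    qed
  qed
  have Qu: "mat_adjoint Q *\<^sub>v u = 0\<^sub>v k"
  proof (rule eq_vecI)
    fix i assume "i < dim_vec (0\<^sub>v k :: 'a vec)"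
    hence i: "i < k" by simp
    show "(mat_adjoint Q *\<^sub>v u) $ i = 0\<^sub>v k $ i"
      by (subst adj_mult_vec_index[OF Qcar uc i]) (use uQ i in simp)
  qed (use Qcar in simp)
  define Q' where "Q' = hcat Q (colmat u)"
  have Q'car: "Q' \<in> carrier_mat n (k+1)" unfolding Q'_def using hcat_carrier[OF Qcar colmat_carrier[OF uc]] .
  have "onm Q' n (k+1)" unfolding Q'_def
    by (rule onm_hcat[OF Q onm_colmat[OF uc u1] adj_colmat_zero[OF Qcar uc Qu]])
  moreover have colQ': "col Q' m = (if m < k then col Q m else u)" if "m < Suc k" for m
    using col_hcat[OF Qcar colmat_carrier[OF uc], of m] that unfolding Q'_def by auto
  moreover have "\<forall>m<Suc k. c m = of_real (sqrt (nsq (c m))) \<cdot>\<^sub>v col Q' m"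
    using Qc uk colQ' by (auto simp: less_Suc_eq)
  moreover have "\<forall>m<Suc k. \<forall>l. Suc k \<le> l \<and> l < r \<longrightarrow> c l \<bullet>c col Q' m = 0"
    using Qo uf colQ' by (auto simp: less_Suc_eq)
  ultimately show ?case by auto
qed


lemma tr2: fixes U M :: "'a::rc_field mat"
  assumes U: "onm U r r" and M: "M \<in> carrier_mat r r"
  shows "(\<Sum>m<r. (M *\<^sub>v col U m) \<bullet>c col U m) = (\<Sum>i<r. M $$ (i,i))"
proof -
  have Uc: "U \<in> carrier_mat r r" using onm_carrier[OF U] .
  have UU: "(\<Sum>m<r. U $$ (j,m) * conjugate (U $$ (i,m))) = (if j = i then 1 else 0)" if "j < r" "i < r" for i j
  proof -
    have "(U * mat_adjoint U) $$ (j,i) = (\<Sum>m<r. U $$ (j,m) * conjugate (U $$ (i,m)))"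
      using Uc that by (simp add: scalar_prod_def atLeast0LessThan)
    thus ?thesis unfolding onm_square_inv[OF U] using that by simp
  qed
  have "(\<Sum>m<r. (M *\<^sub>v col U m) \<bullet>c col U m) = (\<Sum>m<r. \<Sum>i<r. (\<Sum>j<r. M $$ (i,j) * U $$ (j,m)) * conjugate (U $$ (i,m)))"
    using M Uc by (intro sum.cong refl) (simp add: scalar_prod_def atLeast0LessThan)
  also have "\<dots> = (\<Sum>i<r. \<Sum>j<r. M $$ (i,j) * (\<Sum>m<r. U $$ (j,m) * conjugate (U $$ (i,m))))"
    by (subst sum.swap) (simp add: sum_distrib_left sum_distrib_right mult_ac, subst sum.swap, rule refl)
  also have "\<dots> = (\<Sum>i<r. \<Sum>j<r. M $$ (i,j) * (if j = i then 1 else 0))"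
    by (intro sum.cong refl) (simp add: UU)
  also have "\<dots> = (\<Sum>i<r. M $$ (i,i))"
  proof (intro sum.cong refl)
    fix i assume "i \<in> {..<r}"
    have "(\<Sum>j<r. M $$ (i,j) * (if j = i then 1 else 0)) = (\<Sum>j<r. if j = i then M $$ (i,i) else 0)"
      by (rule sum.cong) auto
    also have "\<dots> = M $$ (i,i)" using \<open>i \<in> {..<r}\<close> by simp
    finally show "(\<Sum>j<r. M $$ (i,j) * (if j = i then 1 else 0)) = M $$ (i,i)" .
  qed
  finally show ?thesis .
qed

lemma tr1: fixes X :: "'a::rc_field mat" and x y :: "'p \<Rightarrow> 'a vec"
  assumes X: "X \<in> carrier_mat r r" and xy: "\<And>p. p \<in> P \<Longrightarrow> x p \<in> carrier_vec r \<and> y p \<in> carrier_vec r"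
  shows "(\<Sum>p\<in>P. (X *\<^sub>v y p) \<bullet>c x p) =
    (\<Sum>i<r. (X * mat r r (\<lambda>(k,i). \<Sum>p\<in>P. y p $ k * conjugate (x p $ i))) $$ (i,i))"
proof -
  have "(\<Sum>p\<in>P. (X *\<^sub>v y p) \<bullet>c x p) = (\<Sum>p\<in>P. \<Sum>i<r. (\<Sum>k<r. X $$ (i,k) * y p $ k) * conjugate (x p $ i))"
  proof (intro sum.cong refl)
    fix p assume "p \<in> P"
    hence d: "dim_vec (x p) = r" "dim_vec (y p) = r" using xy by auto
    have dX: "dim_row X = r" "dim_col X = r" using X by auto
    show "(X *\<^sub>v y p) \<bullet>c x p = (\<Sum>i<r. (\<Sum>k<r. X $$ (i,k) * y p $ k) * conjugate (x p $ i))"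
      using d dX by (simp add: scalar_prod_def atLeast0LessThan)
  qed
  also have "\<dots> = (\<Sum>i<r. \<Sum>k<r. X $$ (i,k) * (\<Sum>p\<in>P. y p $ k * conjugate (x p $ i)))"
    by (subst sum.swap) (simp add: sum_distrib_left sum_distrib_right mult_ac, subst sum.swap, rule refl)
  also have "\<dots> = (\<Sum>i<r. (X * mat r r (\<lambda>(k,i). \<Sum>p\<in>P. y p $ k * conjugate (x p $ i))) $$ (i,i))"
    using X by (intro sum.cong refl) (simp add: scalar_prod_def atLeast0LessThan)
  finally show ?thesis .
qed

lemma range_proj: fixes V :: "'a::rc_field mat"
  assumes V: "onm V n r" and v: "v \<in> mat_range V"
  shows "v = V *\<^sub>v (mat_adjoint V *\<^sub>v v)"
proof -
  have Vc: "V \<in> carrier_mat n r" using onm_carrier[OF V] .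
  from v obtain z where z: "z \<in> carrier_vec r" "v = V *\<^sub>v z" unfolding mat_range_def using Vc by auto
  have "mat_adjoint V *\<^sub>v v = (mat_adjoint V * V) *\<^sub>v z"
    unfolding z(2) by (rule assoc_mult_mat_vec[symmetric, OF adj_carrier[OF Vc] Vc z(1)])
  also have "\<dots> = z" unfolding onm_id[OF V] using z by simp
  finally show ?thesis using z by simp
qed

lemma contraction: fixes V :: "'a::rc_field mat"
  assumes V: "onm V n r" and z: "z \<in> carrier_vec n"
  shows "nsq (mat_adjoint V *\<^sub>v z) \<le> nsq z"
proof -
  have Vc: "V \<in> carrier_mat n r" using onm_carrier[OF V] .
  define y where "y = mat_adjoint V *\<^sub>v z"
  have yc: "y \<in> carrier_vec r" unfolding y_def by (rule mult_mat_vec_carrier[OF adj_carrier[OF Vc] z])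
  define p where "p = V *\<^sub>v y"
  have pc: "p \<in> carrier_vec n" unfolding p_def using Vc yc by simp
  have np: "nsq p = nsq y" unfolding p_def by (rule onm_isometry[OF V yc])
  have "p \<bullet>c z = y \<bullet>c y" unfolding p_def using adj_cscalar[OF Vc yc z] by (simp add: y_def)
  hence "z \<bullet>c p = of_real (nsq y)" using cscalar_swap[OF pc z] unfolding cscalar_self by simp
  hence "re (z \<bullet>c p) = nsq y" by simp
  hence "nsq (z - p) = nsq z - nsq y" using nsq_diff[OF z pc] np by simp
  thus ?thesis using nsq_nonneg[of "z - p"] unfolding y_def by simp
qed

lemma onm_mult: fixes A C :: "'a::rc_field mat"
  assumes A: "onm A n k" and C: "onm C k m"
  shows "onm (A * C) n m"
proof -
  have Ac: "A \<in> carrier_mat n k" and Cc: "C \<in> carrier_mat k m" using A C onm_carrier by auto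
  have AHc: "mat_adjoint A \<in> carrier_mat k n" and CHc: "mat_adjoint C \<in> carrier_mat m k" using Ac Cc by auto
  have ACc: "A * C \<in> carrier_mat n m" using Ac Cc by simp
  have "mat_adjoint (A * C) * (A * C) = mat_adjoint C * (mat_adjoint A * (A * C))"
    unfolding adj_mult[OF Ac Cc] by (rule assoc_mult_mat[OF CHc AHc ACc])
  also have "mat_adjoint A * (A * C) = (mat_adjoint A * A) * C"
    by (rule assoc_mult_mat[symmetric, OF AHc Ac Cc])
  also have "\<dots> = C" unfolding onm_id[OF A] using Cc by simp
  also have "mat_adjoint C * C = 1\<^sub>m m" by (rule onm_id[OF C])
  finally show ?thesis unfolding onm_def using Ac Cc by auto
qed

lemma onm_adj_square: fixes U :: "'a::rc_field mat"
  assumes U: "onm U n n" shows "onm (mat_adjoint U) n n"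
  unfolding onm_def using onm_square_inv[OF U] onm_carrier[OF U] by simp


lemma re_cscalar_swap: fixes a b :: "'a::rc_field vec"
  assumes "a \<in> carrier_vec n" "b \<in> carrier_vec n"
  shows "re (a \<bullet>c b) = re (b \<bullet>c a)"
  using cscalar_swap[OF assms] by simp

lemma nsq_one: "(v::'a::rc_field vec) \<bullet>c v = 1 \<Longrightarrow> nsq v = 1"
  unfolding cscalar_self by (metis of_real_1 of_real_eq_iff)

lemma core:
  fixes V B :: "'a::rc_field mat" and w wh :: "'p \<Rightarrow> 'a vec"
  assumes V: "onm V n r" and B: "onm B n r"
    and w: "\<And>p. p \<in> P \<Longrightarrow> w p \<in> mat_range V" and wh: "\<And>p. p \<in> P \<Longrightarrow> wh p \<in> mat_range B"
  shows "\<exists>Vh. onm Vh n r \<and> mat_range B \<subseteq> mat_range Vh \<and>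
     (\<Sum>p\<in>P. nsq (mat_adjoint V *\<^sub>v w p - mat_adjoint Vh *\<^sub>v wh p)) \<le> (\<Sum>p\<in>P. nsq (w p - wh p))"
proof -
  have Vc: "V \<in> carrier_mat n r" and Bc: "B \<in> carrier_mat n r" using V B onm_carrier by auto
  define x where "x = (\<lambda>p. mat_adjoint V *\<^sub>v w p)"
  define y where "y = (\<lambda>p. mat_adjoint B *\<^sub>v wh p)"
  have xc: "x p \<in> carrier_vec r" for p unfolding x_def carrier_vec_def using Vc by simp
  have yc: "y p \<in> carrier_vec r" for p unfolding y_def carrier_vec_def using Bc by simp
  have wx: "w p = V *\<^sub>v x p" if "p \<in> P" for p unfolding x_def by (rule range_proj[OF V w[OF that]])
  have why: "wh p = B *\<^sub>v y p" if "p \<in> P" for p unfolding y_def by (rule range_proj[OF B wh[OF that]])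
  define G where "G = mat r r (\<lambda>(k,i). \<Sum>p\<in>P. y p $ k * conjugate (x p $ i))"
  have Gc: "G \<in> carrier_mat r r" unfolding G_def by simp
  define A where "A = mat_adjoint G * G"
  have Ac: "A \<in> carrier_mat r r" unfolding A_def by (rule mult_carrier_mat[OF adj_carrier[OF Gc] Gc])
  have hA: "mat_adjoint A = A" unfolding A_def adj_mult[OF adj_carrier[OF Gc] Gc] by simp
  obtain U d where U: "onm U r r" and ev: "\<forall>j<r. A *\<^sub>v col U j = of_real (d j) \<cdot>\<^sub>v col U j"
    using spectral[OF Ac hA] by blast
  have Uc: "U \<in> carrier_mat r r" using onm_carrier[OF U] .
  have uc: "col U m \<in> carrier_vec r" for m using col_dim[of U m] Uc by (metis carrier_matD(1))
  define c where "c = (\<lambda>m. G *\<^sub>v col U m)"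
  have cc: "c m \<in> carrier_vec r" for m unfolding c_def using Gc uc[of m] by simp
  have orth: "c j \<bullet>c c i = 0" if ij: "i < r" "j < r" "i \<noteq> j" for i j
  proof -
    have "c j \<bullet>c c i = col U j \<bullet>c (mat_adjoint G *\<^sub>v (G *\<^sub>v col U i))"
      unfolding c_def by (rule adj_cscalar[OF Gc uc], use Gc uc in simp)
    also have "mat_adjoint G *\<^sub>v (G *\<^sub>v col U i) = A *\<^sub>v col U i"
      unfolding A_def by (rule assoc_mult_mat_vec[symmetric, OF adj_carrier[OF Gc] Gc uc])
    also have "\<dots> = of_real (d i) \<cdot>\<^sub>v col U i" using ev ij by simp
    also have "col U j \<bullet>c (of_real (d i) \<cdot>\<^sub>v col U i) = of_real (d i) * (col U j \<bullet>c col U i)"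
      using uc by (simp add: conjugate_smult_vec)
    also have "col U j \<bullet>c col U i = 0" using onm_col[OF U ij(1,2)] ij by simp
    finally show ?thesis by simp
  qed
  have "\<exists>Q. onm Q r r \<and> (\<forall>m<r. c m = of_real (sqrt (nsq (c m))) \<cdot>\<^sub>v col Q m)
            \<and> (\<forall>m<r. \<forall>l. r \<le> l \<and> l < r \<longrightarrow> c l \<bullet>c col Q m = 0)"
    by (rule ortho_Q[of r c r], use cc orth in auto)
  then obtain Q where Q: "onm Q r r" and Qc: "\<forall>m<r. c m = of_real (sqrt (nsq (c m))) \<cdot>\<^sub>v col Q m"
    by blast
  define \<sigma> where "\<sigma> = (\<lambda>m. sqrt (nsq (c m)))"
  have Qcar: "Q \<in> carrier_mat r r" using onm_carrier[OF Q] .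
  have qc: "col Q m \<in> carrier_vec r" for m using col_dim[of Q m] Qcar by (metis carrier_matD(1))
  define Z where "Z = U * mat_adjoint Q"
  have Z: "onm Z r r" unfolding Z_def by (rule onm_mult[OF U onm_adj_square[OF Q]])
  have Zc: "Z \<in> carrier_mat r r" using onm_carrier[OF Z] .
  define Vh where "Vh = B * mat_adjoint Z"
  have Vh: "onm Vh n r" unfolding Vh_def by (rule onm_mult[OF B onm_adj_square[OF Z]])
  have Vhc: "Vh \<in> carrier_mat n r" using onm_carrier[OF Vh] .
  have adjVh: "mat_adjoint Vh = Z * mat_adjoint B"
    unfolding Vh_def adj_mult[OF Bc adj_carrier[OF Zc]] by simp
  have BVh: "Vh * Z = B"
  proof -
    have "Vh * Z = B * (mat_adjoint Z * Z)" unfolding Vh_def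
      by (rule assoc_mult_mat[OF Bc adj_carrier[OF Zc] Zc])
    thus ?thesis unfolding onm_id[OF Z] using Bc by simp
  qed
  have range: "mat_range B \<subseteq> mat_range Vh"
  proof
    fix v assume "v \<in> mat_range B"
    then obtain z where z: "z \<in> carrier_vec r" "v = B *\<^sub>v z" unfolding mat_range_def using Bc by auto
    have "v = Vh *\<^sub>v (Z *\<^sub>v z)" unfolding z(2) BVh[symmetric]
      by (rule assoc_mult_mat_vec[OF Vhc Zc z(1)])
    thus "v \<in> mat_range Vh" using mult_mat_vec_in_range[OF Vhc, of "Z *\<^sub>v z"] Zc z(1) by simp
  qed
  have Vhy: "mat_adjoint Vh *\<^sub>v wh p = Z *\<^sub>v y p" if "p \<in> P" for p
    unfolding adjVh y_def by (rule assoc_mult_mat_vec[OF Zc adj_carrier[OF Bc]], use why[OF that] Bc yc[of p] in simp)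
  define D where "D = mat_adjoint V * B"
  have Dc: "D \<in> carrier_mat r r" unfolding D_def by (rule mult_carrier_mat[OF adj_carrier[OF Vc] Bc])
  define F where "F = (\<lambda>X. \<Sum>p\<in>P. (X *\<^sub>v y p) \<bullet>c x p)"
  have FX: "F X = (\<Sum>m<r. (X *\<^sub>v c m) \<bullet>c col U m)" if X: "X \<in> carrier_mat r r" for X
  proof -
    have "F X = (\<Sum>i<r. (X * G) $$ (i,i))" unfolding F_def G_def
      by (rule tr1[OF X], use xc yc in auto)
    also have "\<dots> = (\<Sum>m<r. ((X * G) *\<^sub>v col U m) \<bullet>c col U m)"
      by (rule tr2[symmetric, OF U], use X Gc in simp)
    also have "\<dots> = (\<Sum>m<r. (X *\<^sub>v c m) \<bullet>c col U m)"
      unfolding c_def using X Gc uc by (intro sum.cong refl) simp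
    finally show ?thesis .
  qed
  have Zq: "Z *\<^sub>v col Q m = col U m" if m: "m < r" for m
  proof -
    have "Z * Q = U * (mat_adjoint Q * Q)" unfolding Z_def
      by (rule assoc_mult_mat[OF Uc adj_carrier[OF Qcar] Qcar])
    hence ZQ: "Z * Q = U" unfolding onm_id[OF Q] using Uc by simp
    have "col (Z * Q) m = Z *\<^sub>v col Q m" by (rule col_mult2[OF Zc Qcar m])
    thus ?thesis unfolding ZQ by simp
  qed
  have FZ: "re (F Z) = (\<Sum>m<r. \<sigma> m)"
  proof -
    have "re (F Z) = (\<Sum>m<r. re ((Z *\<^sub>v c m) \<bullet>c col U m))" unfolding FX[OF Zc] re_sum ..
    also have "\<dots> = (\<Sum>m<r. \<sigma> m)"
    proof (intro sum.cong refl)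
      fix m assume "m \<in> {..<r}"
      hence m: "m < r" by simp
      have "Z *\<^sub>v c m = of_real (\<sigma> m) \<cdot>\<^sub>v col U m"
        unfolding \<sigma>_def using Qc m Zq[OF m] mult_mat_vec[OF Zc qc] by metis
      hence "(Z *\<^sub>v c m) \<bullet>c col U m = of_real (\<sigma> m) * (col U m \<bullet>c col U m)" using uc by simp
      also have "col U m \<bullet>c col U m = 1" using onm_col[OF U m m] by simp
      finally show "re ((Z *\<^sub>v c m) \<bullet>c col U m) = \<sigma> m" by simp
    qed
    finally show ?thesis .
  qed
  have FD: "re (F D) \<le> (\<Sum>m<r. \<sigma> m)"
  proof -
    have "re (F D) = (\<Sum>m<r. re ((D *\<^sub>v c m) \<bullet>c col U m))" unfolding FX[OF Dc] re_sum ..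
    also have "\<dots> \<le> (\<Sum>m<r. \<sigma> m)"
    proof (intro sum_mono)
      fix m assume "m \<in> {..<r}"
      hence m: "m < r" by simp
      have "D *\<^sub>v c m = of_real (\<sigma> m) \<cdot>\<^sub>v (D *\<^sub>v col Q m)"
        unfolding \<sigma>_def using Qc m mult_mat_vec[OF Dc qc] by metis
      moreover have "D *\<^sub>v col Q m \<in> carrier_vec r" using Dc qc[of m] by simp
      ultimately have "re ((D *\<^sub>v c m) \<bullet>c col U m) = \<sigma> m * re ((D *\<^sub>v col Q m) \<bullet>c col U m)"
        using uc[of m] by simp
      also have "re ((D *\<^sub>v col Q m) \<bullet>c col U m) \<le> 1"
      proof -
        have Dqc: "D *\<^sub>v col Q m \<in> carrier_vec r" using Dc qc by simp
        have "D *\<^sub>v col Q m = mat_adjoint V *\<^sub>v (B *\<^sub>v col Q m)"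
          unfolding D_def by (rule assoc_mult_mat_vec[OF adj_carrier[OF Vc] Bc qc])
        hence "nsq (D *\<^sub>v col Q m) \<le> nsq (B *\<^sub>v col Q m)"
          using contraction[OF V, of "B *\<^sub>v col Q m"] Bc qc by simp
        also have "\<dots> = nsq (col Q m)" by (rule onm_isometry[OF B qc])
        also have "\<dots> = 1" using nsq_one onm_col[OF Q m m] by simp
        finally have "nsq (D *\<^sub>v col Q m) \<le> 1" .
        moreover have "nsq (col U m) = 1" using nsq_one onm_col[OF U m m] by simp
        ultimately show ?thesis using re_cscalar_le[OF Dqc uc[of m]] by simp
      qed
      hence "\<sigma> m * re ((D *\<^sub>v col Q m) \<bullet>c col U m) \<le> \<sigma> m * 1"
        by (intro mult_left_mono) (auto simp: \<sigma>_def nsq_nonneg)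
      finally show "re ((D *\<^sub>v c m) \<bullet>c col U m) \<le> \<sigma> m" by simp
    qed
    finally show ?thesis .
  qed
  have lhs: "(\<Sum>p\<in>P. nsq (mat_adjoint V *\<^sub>v w p - mat_adjoint Vh *\<^sub>v wh p)) =
     (\<Sum>p\<in>P. nsq (x p) + nsq (y p)) - 2 * re (F Z)"
  proof -
    have "(\<Sum>p\<in>P. nsq (mat_adjoint V *\<^sub>v w p - mat_adjoint Vh *\<^sub>v wh p)) =
       (\<Sum>p\<in>P. nsq (x p) + nsq (y p) - 2 * re ((Z *\<^sub>v y p) \<bullet>c x p))"
    proof (intro sum.cong refl)
      fix p assume p: "p \<in> P"
      have Zyc: "Z *\<^sub>v y p \<in> carrier_vec r" using Zc yc by simp
      have "nsq (mat_adjoint V *\<^sub>v w p - mat_adjoint Vh *\<^sub>v wh p) = nsq (x p - Z *\<^sub>v y p)"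
        unfolding Vhy[OF p] x_def ..
      also have "\<dots> = nsq (x p) + nsq (Z *\<^sub>v y p) - 2 * re (x p \<bullet>c (Z *\<^sub>v y p))"
        by (rule nsq_diff[OF xc Zyc])
      also have "nsq (Z *\<^sub>v y p) = nsq (y p)" by (rule onm_isometry[OF Z yc])
      also have "re (x p \<bullet>c (Z *\<^sub>v y p)) = re ((Z *\<^sub>v y p) \<bullet>c x p)" by (rule re_cscalar_swap[OF xc Zyc])
      finally show "nsq (mat_adjoint V *\<^sub>v w p - mat_adjoint Vh *\<^sub>v wh p) =
         nsq (x p) + nsq (y p) - 2 * re ((Z *\<^sub>v y p) \<bullet>c x p)" .
    qed
    also have "\<dots> = (\<Sum>p\<in>P. nsq (x p) + nsq (y p)) - 2 * re (F Z)"
      unfolding F_def re_sum by (simp add: sum_subtractf sum_distrib_left)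
    finally show ?thesis .
  qed
  have rhs: "(\<Sum>p\<in>P. nsq (w p - wh p)) = (\<Sum>p\<in>P. nsq (x p) + nsq (y p)) - 2 * re (F D)"
  proof -
    have "(\<Sum>p\<in>P. nsq (w p - wh p)) = (\<Sum>p\<in>P. nsq (x p) + nsq (y p) - 2 * re ((D *\<^sub>v y p) \<bullet>c x p))"
    proof (intro sum.cong refl)
      fix p assume p: "p \<in> P"
      have Vxc: "V *\<^sub>v x p \<in> carrier_vec n" using Vc xc by simp
      have Byc: "B *\<^sub>v y p \<in> carrier_vec n" using Bc yc by simp
      have Dyc: "D *\<^sub>v y p \<in> carrier_vec r" using Dc yc by simp
      have "nsq (w p - wh p) = nsq (V *\<^sub>v x p - B *\<^sub>v y p)" unfolding wx[OF p] why[OF p] ..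
      also have "\<dots> = nsq (V *\<^sub>v x p) + nsq (B *\<^sub>v y p) - 2 * re ((V *\<^sub>v x p) \<bullet>c (B *\<^sub>v y p))"
        by (rule nsq_diff[OF Vxc Byc])
      also have "nsq (V *\<^sub>v x p) = nsq (x p)" by (rule onm_isometry[OF V xc])
      also have "nsq (B *\<^sub>v y p) = nsq (y p)" by (rule onm_isometry[OF B yc])
      also have "(V *\<^sub>v x p) \<bullet>c (B *\<^sub>v y p) = x p \<bullet>c (mat_adjoint V *\<^sub>v (B *\<^sub>v y p))"
        by (rule adj_cscalar[OF Vc xc Byc])
      also have "mat_adjoint V *\<^sub>v (B *\<^sub>v y p) = D *\<^sub>v y p"
        unfolding D_def by (rule assoc_mult_mat_vec[symmetric, OF adj_carrier[OF Vc] Bc yc])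
      also have "re (x p \<bullet>c (D *\<^sub>v y p)) = re ((D *\<^sub>v y p) \<bullet>c x p)" by (rule re_cscalar_swap[OF xc Dyc])
      finally show "nsq (w p - wh p) = nsq (x p) + nsq (y p) - 2 * re ((D *\<^sub>v y p) \<bullet>c x p)" .
    qed
    also have "\<dots> = (\<Sum>p\<in>P. nsq (x p) + nsq (y p)) - 2 * re (F D)"
      unfolding F_def re_sum by (simp add: sum_subtractf sum_distrib_left)
    finally show ?thesis .
  qed
  have "(\<Sum>p\<in>P. nsq (mat_adjoint V *\<^sub>v w p - mat_adjoint Vh *\<^sub>v wh p)) \<le> (\<Sum>p\<in>P. nsq (w p - wh p))"
    unfolding lhs rhs using FZ FD by simp
  thus ?thesis using Vh range by blast
qed

abbreviation vspan :: "nat \<Rightarrow> 'a::field vec set \<Rightarrow> 'a vec set" where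
  "vspan n T \<equiv> LinearCombinations.module.span class_ring (module_vec TYPE('a) n) T"

abbreviation vdim :: "nat \<Rightarrow> 'a::field vec set \<Rightarrow> nat" where
  "vdim n T \<equiv> vectorspace.dim class_ring ((module_vec TYPE('a) n)\<lparr>carrier := vspan n T\<rparr>)"

lemma on_lin_indpt: fixes S :: "'a::rc_field vec set"
  assumes S: "S \<subseteq> carrier_vec n" "finite S"
    and on: "\<And>u. u \<in> S \<Longrightarrow> u \<bullet>c u = 1" "\<And>u v. u \<in> S \<Longrightarrow> v \<in> S \<Longrightarrow> u \<noteq> v \<Longrightarrow> u \<bullet>c v = 0"
  shows "\<not> LinearCombinations.module.lin_dep class_ring (module_vec TYPE('a) n) S"
proof
  interpret vs: vec_space "TYPE('a)" n .
  assume "vs.lin_dep S"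
  from vs.finite_lin_dep[OF S(2) this] S(1) obtain a v where
    a: "vs.lincomb a S = 0\<^sub>v n" and v: "v \<in> S" and av: "a v \<noteq> 0" by auto
  have vc: "v \<in> carrier_vec n" using v S by auto
  have "vs.lincomb a S \<bullet>c v = (\<Sum>i<n. (\<Sum>x\<in>S. a x * x $ i) * conjugate (v $ i))"
    using vc S by (simp add: scalar_prod_def vs.lincomb_index atLeast0LessThan)
  also have "\<dots> = (\<Sum>x\<in>S. a x * (\<Sum>i<n. x $ i * conjugate (v $ i)))"
    by (simp add: sum_distrib_left sum_distrib_right mult_ac, subst sum.swap, rule refl)
  also have "\<dots> = (\<Sum>x\<in>S. a x * (x \<bullet>c v))"
  proof (intro sum.cong refl)
    fix x assume "x \<in> S"
    hence "x \<in> carrier_vec n" using S by auto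
    thus "a x * (\<Sum>i<n. x $ i * conjugate (v $ i)) = a x * (x \<bullet>c v)"
      using vc by (simp add: scalar_prod_def atLeast0LessThan)
  qed
  also have "\<dots> = (\<Sum>x\<in>S. if x = v then a v else 0)"
    by (intro sum.cong refl) (use on v in auto)
  also have "\<dots> = a v" using v S by simp
  finally have "a v = 0" using a vc by simp
  thus False using av by simp
qed

lemma span_facts: fixes T :: "'a::field vec set"
  assumes T: "T \<subseteq> carrier_vec n" "finite T"
  shows "vectorspace class_ring ((module_vec TYPE('a) n)\<lparr>carrier := vspan n T\<rparr>)"
    and "vectorspace.fin_dim class_ring ((module_vec TYPE('a) n)\<lparr>carrier := vspan n T\<rparr>)"
    and "\<And>S. S \<subseteq> vspan n T \<Longrightarrow> LinearCombinations.module.lin_dep class_ring ((module_vec TYPE('a) n)\<lparr>carrier := vspan n T\<rparr>) S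
            = LinearCombinations.module.lin_dep class_ring (module_vec TYPE('a) n) S"
    and "vspan n T \<subseteq> carrier_vec n"
proof -
  interpret vs: vec_space "TYPE('a)" n .
  have sub: "VectorSpace.subspace class_ring (vs.span T) (module_vec TYPE('a) n)"
    using vs.span_is_subspace[of T] T by simp
  show vsW: "vectorspace class_ring ((module_vec TYPE('a) n)\<lparr>carrier := vspan n T\<rparr>)"
    using vs.subspace_is_vs[OF sub] .
  have subm: "submodule class_ring (vs.span T) (module_vec TYPE('a) n)"
    using vs.span_is_submodule[of T] T by simp
  show "\<And>S. S \<subseteq> vspan n T \<Longrightarrow> LinearCombinations.module.lin_dep class_ring ((module_vec TYPE('a) n)\<lparr>carrier := vspan n T\<rparr>) S
            = LinearCombinations.module.lin_dep class_ring (module_vec TYPE('a) n) S"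
    using vs.span_li_not_depend(2)[OF _ subm] by simp
  interpret W: vectorspace class_ring "(module_vec TYPE('a) n)\<lparr>carrier := vspan n T\<rparr>" by (rule vsW)
  have TW: "T \<subseteq> vs.span T" using vs.in_own_span T by simp
  have "W.span T = vs.span T" using vs.span_li_not_depend(1)[OF TW subm] by simp
  thus "W.fin_dim" unfolding W.fin_dim_def using TW T by auto
  show "vspan n T \<subseteq> carrier_vec n" using vs.span_is_subset2[of T] T by simp
qed

lemma onm_cols_le_dim: fixes B :: "'a::rc_field mat"
  assumes T: "T \<subseteq> carrier_vec n" "finite T" and B: "onm B n k"
    and cols: "\<And>j. j < k \<Longrightarrow> col B j \<in> vspan n T"
  shows "k \<le> vdim n T"
proof -
  interpret W: vectorspace class_ring "(module_vec TYPE('a) n)\<lparr>carrier := vspan n T\<rparr>"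
    by (rule span_facts(1)[OF T])
  have Bc: "B \<in> carrier_mat n k" using onm_carrier[OF B] .
  define S where "S = col B ` {..<k}"
  have inj: "inj_on (col B) {..<k}"
  proof (rule inj_onI)
    fix i j assume ij: "i \<in> {..<k}" "j \<in> {..<k}" and e: "col B i = col B j"
    show "i = j"
    proof (rule ccontr)
      assume "i \<noteq> j"
      hence "col B j \<bullet>c col B i = 0" using onm_col[OF B, of i j] ij by simp
      moreover have "col B j \<bullet>c col B j = 1" using onm_col[OF B, of j j] ij by simp
      ultimately show False using e by simp
    qed
  qed
  have cardS: "card S = k" unfolding S_def using card_image[OF inj] by simp
  have Sc: "S \<subseteq> carrier_vec n"
  proof
    fix x assume "x \<in> S"
    then obtain i where "x = col B i" unfolding S_def by auto
    thus "x \<in> carrier_vec n" using col_dim[of B i] Bc by simp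
  qed
  have SW: "S \<subseteq> vspan n T" unfolding S_def using cols by auto
  have li: "\<not> LinearCombinations.module.lin_dep class_ring (module_vec TYPE('a) n) S"
  proof (rule on_lin_indpt[OF Sc])
    show "finite S" unfolding S_def by simp
    show "u \<bullet>c u = 1" if "u \<in> S" for u
    proof -
      obtain i where i: "i < k" "u = col B i" using \<open>u \<in> S\<close> unfolding S_def by auto
      thus ?thesis using onm_col[OF B i(1) i(1)] by simp
    qed
    show "u \<bullet>c v = 0" if "u \<in> S" "v \<in> S" "u \<noteq> v" for u v
    proof -
      obtain i where i: "i < k" "u = col B i" using \<open>u \<in> S\<close> unfolding S_def by auto
      obtain j where j: "j < k" "v = col B j" using \<open>v \<in> S\<close> unfolding S_def by auto
      have "i \<noteq> j" using i j that by auto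
      thus ?thesis using onm_col[OF B j(1) i(1)] i j by simp
    qed
  qed
  hence "\<not> W.lin_dep S" using span_facts(3)[OF T SW] by simp
  from W.li_le_dim(2)[OF span_facts(2)[OF T] _ this] SW
  show ?thesis using cardS by simp
qed

lemma vdim_le_n: fixes T :: "'a::field vec set"
  assumes T: "T \<subseteq> carrier_vec n" "finite T"
  shows "vdim n T \<le> n"
proof -
  interpret vs: vec_space "TYPE('a)" n .
  interpret W: vectorspace class_ring "(module_vec TYPE('a) n)\<lparr>carrier := vspan n T\<rparr>"
    by (rule span_facts(1)[OF T])
  obtain \<beta> where \<beta>: "finite \<beta>" "W.basis \<beta>" using W.finite_basis_exists[OF span_facts(2)[OF T]] by blast
  have dim: "W.dim = card \<beta>" by (rule W.dim_basis[OF \<beta>])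
  have \<beta>W: "\<beta> \<subseteq> vspan n T" using \<beta>(2) unfolding W.basis_def by simp
  have "\<not> W.lin_dep \<beta>" using \<beta>(2) unfolding W.basis_def by simp
  hence li: "\<not> vs.lin_dep \<beta>" using span_facts(3)[OF T \<beta>W] by simp
  have \<beta>c: "\<beta> \<subseteq> carrier_vec n" using \<beta>W span_facts(4)[OF T] by auto
  have "card \<beta> \<le> vs.dim" using vs.li_le_dim(2)[OF vs.fin_dim _ li] \<beta>c by simp
  thus ?thesis using dim vs.dim_is_n by simp
qed


lemma mat_range_span: fixes B :: "'a::field mat"
  assumes B: "B \<in> carrier_mat n k"
  shows "mat_range B = vspan n (set (cols B))"
proof -
  interpret vs: vec_space "TYPE('a)" n .
  have "vs.col_space B = {y \<in> carrier_vec (dim_row B). \<exists>x\<in>carrier_vec (dim_col B). B *\<^sub>v x = y}"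
    by (rule vs.col_space_eq[OF B])
  also have "\<dots> = mat_range B" unfolding mat_range_def using B by auto
  finally show ?thesis unfolding vs.col_space_def by simp
qed

lemma cols_subset_carrier: "B \<in> carrier_mat n k \<Longrightarrow> set (cols B) \<subseteq> carrier_vec n"
  by (auto simp: cols_def)

lemma span_sub_range: fixes B :: "'a::field mat"
  assumes B: "B \<in> carrier_mat n k" and T: "T \<subseteq> mat_range B"
  shows "vspan n T \<subseteq> mat_range B"
proof -
  interpret vs: vec_space "TYPE('a)" n .
  show ?thesis unfolding mat_range_span[OF B]
    by (rule vs.span_subsetI[OF cols_subset_carrier[OF B]], use T mat_range_span[OF B] in simp)
qed

lemma range_sub_span: fixes B :: "'a::field mat"
  assumes B: "B \<in> carrier_mat n k" and T: "T \<subseteq> carrier_vec n"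
    and cols: "\<And>j. j < k \<Longrightarrow> col B j \<in> vspan n T"
  shows "mat_range B \<subseteq> vspan n T"
proof -
  interpret vs: vec_space "TYPE('a)" n .
  have "set (cols B) \<subseteq> vs.span T"
  proof
    fix x assume "x \<in> set (cols B)"
    then obtain j where j: "j < k" "x = col B j" using B by (auto simp: cols_def)
    thus "x \<in> vs.span T" using cols by simp
  qed
  thus ?thesis unfolding mat_range_span[OF B] using vs.span_subsetI[OF T] by simp
qed

lemma span_diff: fixes T :: "'a::field vec set"
  assumes T: "T \<subseteq> carrier_vec n" and t: "t \<in> vspan n T" and w: "w \<in> vspan n T"
  shows "t - w \<in> vspan n T"
proof -
  interpret vs: vec_space "TYPE('a)" n .
  have fT: "vs.span T \<subseteq> carrier_vec n" using vs.span_is_subset2[OF T] by simp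
  have tc: "t \<in> carrier_vec n" and wc: "w \<in> carrier_vec n" using t w fT by auto
  have "(-1) \<cdot>\<^sub>v w \<in> vs.span T" by (rule vs.smult_in_span[OF T w])
  hence "t + (-1) \<cdot>\<^sub>v w \<in> vs.span T" using vs.span_add1[OF T t] by simp
  moreover have "t + (-1) \<cdot>\<^sub>v w = t - w" by (intro eq_vecI) (use tc wc in auto)
  ultimately show ?thesis by simp
qed

lemma range_hcat: fixes B :: "'a::comm_ring_1 mat"
  assumes B: "B \<in> carrier_mat n k" and C: "C \<in> carrier_mat n m"
  shows "mat_range B \<subseteq> mat_range (hcat B C)"
proof
  fix v assume "v \<in> mat_range B"
  then obtain z where z: "z \<in> carrier_vec k" "v = B *\<^sub>v z" unfolding mat_range_def using B by auto
  define z' where "z' = vec (k + m) (\<lambda>i. if i < k then z $ i else 0)"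
  have "hcat B C *\<^sub>v z' = B *\<^sub>v z"
  proof (rule eq_vecI)
    fix i assume "i < dim_vec (B *\<^sub>v z)"
    hence i: "i < n" using B by simp
    have "(hcat B C *\<^sub>v z') $ i = (\<Sum>l<k+m. hcat B C $$ (i,l) * z' $ l)"
      using B C i by (simp add: scalar_prod_def atLeast0LessThan z'_def)
    also have "\<dots> = (\<Sum>l<k. B $$ (i,l) * z $ l)"
      unfolding sum_split_add using B C i by (simp add: hcat_def z'_def)
    also have "\<dots> = (B *\<^sub>v z) $ i" using B z i by (simp add: scalar_prod_def atLeast0LessThan)
    finally show "(hcat B C *\<^sub>v z') $ i = (B *\<^sub>v z) $ i" .
  qed (use B C in simp)
  moreover have "z' \<in> carrier_vec (k+m)" unfolding z'_def by simp
  ultimately show "v \<in> mat_range (hcat B C)" unfolding mat_range_def using z B C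
    by (metis (mono_tags, lifting) hcat_dim_col carrier_matD(2) mem_Collect_eq)
qed


lemma proj_out: fixes B :: "'a::rc_field mat"
  assumes B: "onm B n k" and t: "t \<in> carrier_vec n" "t \<notin> mat_range B"
  shows "\<exists>u a. u \<in> carrier_vec n \<and> u \<bullet>c u = 1 \<and> mat_adjoint B *\<^sub>v u = 0\<^sub>v k
     \<and> u = a \<cdot>\<^sub>v (t - B *\<^sub>v (mat_adjoint B *\<^sub>v t))"
proof -
  have Bc: "B \<in> carrier_mat n k" using onm_carrier[OF B] .
  have BHc: "mat_adjoint B \<in> carrier_mat k n" using Bc by simp
  define c where "c = mat_adjoint B *\<^sub>v t"
  have cc: "c \<in> carrier_vec k" unfolding c_def using BHc t(1) by simp
  define w where "w = B *\<^sub>v c"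
  have wc: "w \<in> carrier_vec n" unfolding w_def using Bc cc by simp
  define u' where "u' = t - w"
  have u'c: "u' \<in> carrier_vec n" unfolding u'_def using wc t(1) by simp
  have "mat_adjoint B *\<^sub>v u' = mat_adjoint B *\<^sub>v t - mat_adjoint B *\<^sub>v w"
    unfolding u'_def by (rule mult_minus_distrib_mat_vec[OF BHc t(1) wc])
  also have "mat_adjoint B *\<^sub>v w = (mat_adjoint B * B) *\<^sub>v c"
    unfolding w_def by (rule assoc_mult_mat_vec[symmetric, OF BHc Bc cc])
  also have "\<dots> = c" unfolding onm_id[OF B] using cc by simp
  also have "mat_adjoint B *\<^sub>v t - c = 0\<^sub>v k" unfolding c_def by (rule minus_cancel_vec, use BHc t(1) in simp)
  finally have z: "mat_adjoint B *\<^sub>v u' = 0\<^sub>v k" .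
  have u'0: "u' \<noteq> 0\<^sub>v n"
  proof
    assume u0: "u' = 0\<^sub>v n"
    have "t = w"
    proof (rule eq_vecI)
      fix i assume "i < dim_vec w"
      hence i: "i < n" using wc by simp
      have "u' $ i = 0" using u0 i by simp
      thus "t $ i = w $ i" unfolding u'_def using i wc by simp
    qed (use t wc in simp)
    hence "t \<in> mat_range B" unfolding w_def using mult_mat_vec_in_range[OF Bc cc] by simp
    thus False using t by simp
  qed
  define a where "a = 1 / sqrt (nsq u')"
  define u where "u = (of_real a :: 'a) \<cdot>\<^sub>v u'"
  have uc: "u \<in> carrier_vec n" unfolding u_def using u'c by simp
  have u1: "u \<bullet>c u = 1" unfolding u_def a_def by (rule normalize_unit[OF u'c u'0])
  have "mat_adjoint B *\<^sub>v u = of_real a \<cdot>\<^sub>v (mat_adjoint B *\<^sub>v u')" unfolding u_def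
    by (rule mult_mat_vec[OF BHc u'c])
  also have "\<dots> = 0\<^sub>v k" unfolding z by (rule smult_zero_vec')
  finally show ?thesis using uc u1 unfolding u_def u'_def w_def c_def by blast
qed

lemma exists_B: fixes T :: "'a::rc_field vec set"
  assumes T: "T \<subseteq> carrier_vec n" "finite T" and d: "vdim n T \<le> r" and rn: "r \<le> n"
  shows "\<exists>B. onm B n r \<and> T \<subseteq> mat_range B"
proof -
  interpret vs: vec_space "TYPE('a)" n .
  define P where "P = (\<lambda>k. \<exists>B. onm B n k \<and> (\<forall>j<k. col B j \<in> vspan n T))"
  have bound: "k \<le> vdim n T" if "P k" for k
    using that onm_cols_le_dim[OF T] unfolding P_def by blast
  have P0: "P 0" unfolding P_def using zero_mat_n0_onm by blast
  define K where "K = (GREATEST k. P k)"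
  have PK: "P K" unfolding K_def by (rule GreatestI_nat[of P 0 "vdim n T", OF P0 bound])
  have maxK: "k \<le> K" if "P k" for k unfolding K_def by (rule Greatest_le_nat[of P k "vdim n T", OF that bound])
  obtain B where B: "onm B n K" and Bcols: "\<forall>j<K. col B j \<in> vspan n T" using PK unfolding P_def by blast
  have Bc: "B \<in> carrier_mat n K" using onm_carrier[OF B] .
  have rangeB: "mat_range B \<subseteq> vspan n T" by (rule range_sub_span[OF Bc T(1)], use Bcols in simp)
  have TB: "T \<subseteq> mat_range B"
  proof
    fix t assume tT: "t \<in> T"
    show "t \<in> mat_range B"
    proof (rule ccontr)
      assume nt: "t \<notin> mat_range B"
      have tc: "t \<in> carrier_vec n" using tT T by auto
      obtain u a where uc: "u \<in> carrier_vec n" and u1: "u \<bullet>c u = 1" and Bu: "mat_adjoint B *\<^sub>v u = 0\<^sub>v K"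
        and ua: "u = a \<cdot>\<^sub>v (t - B *\<^sub>v (mat_adjoint B *\<^sub>v t))"
        using proj_out[OF B tc nt] by blast
      have tspan: "t \<in> vspan n T" using vs.in_own_span[OF T(1)] tT by auto
      have "mat_adjoint B *\<^sub>v t \<in> carrier_vec K" using Bc tc by (metis adj_carrier mult_mat_vec_carrier)
      hence "B *\<^sub>v (mat_adjoint B *\<^sub>v t) \<in> mat_range B" by (rule mult_mat_vec_in_range[OF Bc])
      hence "B *\<^sub>v (mat_adjoint B *\<^sub>v t) \<in> vspan n T" using rangeB by blast
      hence "t - B *\<^sub>v (mat_adjoint B *\<^sub>v t) \<in> vspan n T" by (rule span_diff[OF T(1) tspan])
      hence uspan: "u \<in> vspan n T" unfolding ua by (rule vs.smult_in_span[OF T(1)])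
      define B' where "B' = hcat B (colmat u)"
      have "onm B' n (K+1)" unfolding B'_def
        by (rule onm_hcat[OF B onm_colmat[OF uc u1] adj_colmat_zero[OF Bc uc Bu]])
      moreover have "\<forall>j<K+1. col B' j \<in> vspan n T"
      proof (intro allI impI)
        fix j assume j: "j < K + 1"
        show "col B' j \<in> vspan n T"
        proof (cases "j < K")
          case True
          thus ?thesis unfolding B'_def using col_hcat1[OF Bc colmat_carrier[OF uc] True] Bcols by simp
        next
          case False
          hence "j = K + 0" using j by simp
          thus ?thesis unfolding B'_def using col_hcat2[OF Bc colmat_carrier[OF uc], of 0] uspan by simp
        qed
      qed
      ultimately have "P (K+1)" unfolding P_def by blast
      thus False using maxK by fastforce
    qed
  qed
  have Kr: "K \<le> r" using bound[OF PK] d by simp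
  obtain C where C: "onm C n (r - K)" and BC: "mat_adjoint B * C = 0\<^sub>m K (r - K)"
    using ext_onm[OF B, of "r - K"] Kr rn by auto
  have Cc: "C \<in> carrier_mat n (r - K)" using onm_carrier[OF C] .
  have "onm (hcat B C) n (K + (r - K))" by (rule onm_hcat[OF B C BC])
  hence "onm (hcat B C) n r" using Kr by simp
  moreover have "T \<subseteq> mat_range (hcat B C)" using TB range_hcat[OF Bc Cc] by auto
  ultimately show ?thesis by blast
qed

lemma tidx_finite: "finite (tidx I)"
proof (rule finite_subset)
  show "tidx I \<subseteq> {xs. set xs \<subseteq> {..<sum_list I} \<and> length xs = length I}"
  proof
    fix xs assume xs: "xs \<in> tidx I"
    have "x < sum_list I" if "x \<in> set xs" for x
    proof -
      obtain k where k: "k < length xs" "x = xs ! k" using \<open>x \<in> set xs\<close> by (auto simp: in_set_conv_nth)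
      have "x < I ! k" using xs k unfolding tidx_def by auto
      also have "I ! k \<le> sum_list I" by (rule member_le_sum_list, use xs k in \<open>auto simp: tidx_def\<close>)
      finally show ?thesis .
    qed
    thus "xs \<in> {xs. set xs \<subseteq> {..<sum_list I} \<and> length xs = length I}" using xs unfolding tidx_def by auto
  qed
  show "finite {xs. set xs \<subseteq> {..<sum_list I} \<and> length xs = length I}"
    by (rule finite_lists_length_eq) simp
qed

lemma tidx_upd: assumes "p \<in> tidx (J[j := m])" "t < J ! j" "j < length J"
  shows "p[j := t] \<in> tidx J"
  using assms unfolding tidx_def by (auto simp: nth_list_update)

lemma tidx_upd2: assumes "p \<in> tidx (J[j := m])" "t < m'" "j < length J"
  shows "p[j := t] \<in> tidx (J[j := m'])"
  using assms unfolding tidx_def by (auto simp: nth_list_update)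

lemma sum_tidx_split:
  assumes j: "j < length J"
  shows "(\<Sum>is\<in>tidx (J[j := m]). f is) = (\<Sum>p\<in>tidx (J[j := 1]). \<Sum>t<m. f (p[j := t]))"
proof -
  have "(\<Sum>p\<in>tidx (J[j := 1]). \<Sum>t<m. f (p[j := t])) = (\<Sum>(p,t)\<in>tidx (J[j := 1]) \<times> {..<m}. f (p[j := t]))"
    by (rule sum.cartesian_product)
  also have "\<dots> = (\<Sum>is\<in>tidx (J[j := m]). f is)"
  proof (rule sum.reindex_bij_witness[where i = "\<lambda>is. (is[j := 0], is ! j)" and j = "\<lambda>(p,t). p[j := t]"])
    fix a assume a: "a \<in> tidx (J[j := 1]) \<times> {..<m}"
    obtain p t where pt: "a = (p,t)" by (cases a)
    have lp: "length p = length J" and p0: "p ! j = 0" and tm: "t < m"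
      using a pt j unfolding tidx_def by (auto simp: nth_list_update)
    have "p[j := 0] = p" using p0 by (metis list_update_id)
    thus "(\<lambda>is. (is[j := 0], is ! j)) ((\<lambda>(p,t). p[j := t]) a) = a" using pt lp j by simp
    show "(\<lambda>(p,t). p[j := t]) a \<in> tidx (J[j := m])"
      using a pt j lp unfolding tidx_def by (auto simp: nth_list_update)
    show "f ((\<lambda>(p,t). p[j := t]) a) = (\<lambda>(p,t). f (p[j := t])) a" using pt by simp
  next
    fix ix assume ix: "ix \<in> tidx (J[j := m])"
    have l: "length ix = length J" using ix unfolding tidx_def by auto
    show "(\<lambda>(p,t). p[j := t]) ((\<lambda>is. (is[j := 0], is ! j)) ix) = ix" using l j by simp
    show "(\<lambda>is. (is[j := 0], is ! j)) ix \<in> tidx (J[j := 1]) \<times> {..<m}"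
      using ix j l unfolding tidx_def by (auto simp: nth_list_update)
  qed
  finally show ?thesis by simp
qed


lemma fiber_carrier[simp]: "fiber X J j p \<in> carrier_vec (J ! j)"
  unfolding fiber_def by simp

lemma fiber_index[simp]: "t < J ! j \<Longrightarrow> fiber X J j p $ t = X (p[j := t])"
  unfolding fiber_def by simp

lemma fiber_dim[simp]: "dim_vec (fiber X J j p) = J ! j"
  unfolding fiber_def by simp

lemma fiber_upd: "fiber X J j (p[j := t]) = fiber X J j p"
  unfolding fiber_def by simp

lemma mode_prod_fiber:
  assumes M: "M \<in> carrier_mat m (J ! j)" and i: "i < m" and lp: "j < length p"
  shows "mode_prod X j M (p[j := i]) = (M *\<^sub>v fiber X J j p) $ i"
proof -
  have "mode_prod X j M (p[j := i]) = (\<Sum>t<J ! j. M $$ (i, t) * X (p[j := t]))"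
    unfolding mode_prod_def using M lp by simp
  also have "\<dots> = (M *\<^sub>v fiber X J j p) $ i"
    using M i by (simp add: scalar_prod_def atLeast0LessThan)
  finally show ?thesis .
qed

lemma frob_sum: "frob J Z = sqrt (\<Sum>ix\<in>tidx J. (norm (Z ix))^2)"
  unfolding frob_def ..

lemma frob_nonneg: "frob J Z \<ge> 0"
  unfolding frob_def by (simp add: sum_nonneg)

lemma onm_zero_rows: assumes "onm V 0 r" shows "r = 0"
proof (rule ccontr)
  assume "r \<noteq> 0"
  hence r: "0 < r" by simp
  have "(mat_adjoint V * V) $$ (0,0) = 1" using onm_id[OF assms] r by simp
  moreover have "(mat_adjoint V * V) $$ (0,0) = 0"
    using onm_carrier[OF assms] r by (simp add: scalar_prod_def)
  ultimately show False by simp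
qed

lemma mode_step:
  fixes X Y :: "'a::rc_field tensor" and V B :: "'a mat"
  assumes j: "j < length J" and V: "onm V (J ! j) r" and B: "onm B (J ! j) r"
    and fX: "\<And>ix. ix \<in> tidx J \<Longrightarrow> fiber X J j ix \<in> mat_range V"
    and fY: "\<And>ix. ix \<in> tidx J \<Longrightarrow> fiber Y J j ix \<in> mat_range B"
  shows "\<exists>Vh. onm Vh (J ! j) r \<and> mat_range B \<subseteq> mat_range Vh \<and>
    frob (J[j := r]) (mode_prod X j (mat_adjoint V) - mode_prod Y j (mat_adjoint Vh)) \<le> frob J (X - Y)"
proof (cases "J ! j = 0")
  case True
  hence r: "r = 0" using onm_zero_rows V by simp
  have "tidx (J[j := r]) = {}" unfolding tidx_def r using j by (auto simp: nth_list_update)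
  hence "frob (J[j := r]) (mode_prod X j (mat_adjoint V) - mode_prod Y j (mat_adjoint B)) = 0"
    unfolding frob_def by simp
  thus ?thesis using B frob_nonneg[of J "X - Y"] by auto
next
  case False
  define n where "n = J ! j"
  have n: "n > 0" using False unfolding n_def by simp
  define P where "P = tidx (J[j := 1])"
  have PJ: "p \<in> tidx J" if "p \<in> P" for p
  proof -
    have "p[j := 0] \<in> tidx J" using tidx_upd[of p J j 1 0] that n j unfolding P_def n_def by simp
    moreover have "p ! j = 0" using that j unfolding P_def tidx_def by (auto simp: nth_list_update)
    ultimately show ?thesis by (metis list_update_id)
  qed
  have lP: "j < length p" if "p \<in> P" for p using that j unfolding P_def tidx_def by auto
  define w where "w = (\<lambda>p. fiber X J j p)"
  define wh where "wh = (\<lambda>p. fiber Y J j p)"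
  obtain Vh where Vh: "onm Vh n r" and rng: "mat_range B \<subseteq> mat_range Vh"
    and ineq: "(\<Sum>p\<in>P. nsq (mat_adjoint V *\<^sub>v w p - mat_adjoint Vh *\<^sub>v wh p)) \<le> (\<Sum>p\<in>P. nsq (w p - wh p))"
    using core[OF V[folded n_def] B[folded n_def], of P w wh] fX fY PJ unfolding w_def wh_def by blast
  have Vc: "V \<in> carrier_mat n r" and Vhc: "Vh \<in> carrier_mat n r" using V Vh onm_carrier unfolding n_def by auto
  have lhs: "(\<Sum>ix\<in>tidx (J[j := r]). (norm ((mode_prod X j (mat_adjoint V) - mode_prod Y j (mat_adjoint Vh)) ix))^2)
      = (\<Sum>p\<in>P. nsq (mat_adjoint V *\<^sub>v w p - mat_adjoint Vh *\<^sub>v wh p))"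
    unfolding sum_tidx_split[OF j] P_def[symmetric]
  proof (intro sum.cong refl)
    fix p assume p: "p \<in> P"
    have "(\<Sum>t<r. (norm ((mode_prod X j (mat_adjoint V) - mode_prod Y j (mat_adjoint Vh)) (p[j := t])))^2)
       = (\<Sum>t<r. (norm ((mat_adjoint V *\<^sub>v w p - mat_adjoint Vh *\<^sub>v wh p) $ t))^2)"
    proof (intro sum.cong refl)
      fix t assume "t \<in> {..<r}"
      hence t: "t < r" by simp
      have "mode_prod X j (mat_adjoint V) (p[j := t]) = (mat_adjoint V *\<^sub>v w p) $ t"
        unfolding w_def by (rule mode_prod_fiber[OF _ t lP[OF p]], use Vc n_def in simp)
      moreover have "mode_prod Y j (mat_adjoint Vh) (p[j := t]) = (mat_adjoint Vh *\<^sub>v wh p) $ t"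
        unfolding wh_def by (rule mode_prod_fiber[OF _ t lP[OF p]], use Vhc n_def in simp)
      ultimately show "(norm ((mode_prod X j (mat_adjoint V) - mode_prod Y j (mat_adjoint Vh)) (p[j := t])))^2
         = (norm ((mat_adjoint V *\<^sub>v w p - mat_adjoint Vh *\<^sub>v wh p) $ t))^2"
        using t Vc Vhc by simp
    qed
    also have "\<dots> = nsq (mat_adjoint V *\<^sub>v w p - mat_adjoint Vh *\<^sub>v wh p)"
    proof -
      have d: "dim_vec (mat_adjoint V *\<^sub>v w p - mat_adjoint Vh *\<^sub>v wh p) = r" using Vhc by simp
      show ?thesis unfolding nsq_def d ..
    qed
    finally show "(\<Sum>t<r. (norm ((mode_prod X j (mat_adjoint V) - mode_prod Y j (mat_adjoint Vh)) (p[j := t])))^2)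
       = nsq (mat_adjoint V *\<^sub>v w p - mat_adjoint Vh *\<^sub>v wh p)" .
  qed
  have rhs: "(\<Sum>ix\<in>tidx J. (norm ((X - Y) ix))^2) = (\<Sum>p\<in>P. nsq (w p - wh p))"
  proof -
    have JJ: "J[j := n] = J" unfolding n_def by simp
    have "(\<Sum>ix\<in>tidx J. (norm ((X - Y) ix))^2) = (\<Sum>ix\<in>tidx (J[j := n]). (norm ((X - Y) ix))^2)"
      unfolding JJ ..
    also have "\<dots> = (\<Sum>p\<in>P. \<Sum>t<n. (norm ((X - Y) (p[j := t])))^2)"
      unfolding P_def by (rule sum_tidx_split[OF j])
    also have "\<dots> = (\<Sum>p\<in>P. nsq (w p - wh p))"
    proof (intro sum.cong refl)
      fix p assume "p \<in> P"
      have d: "dim_vec (w p - wh p) = n" unfolding w_def wh_def n_def by simp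
      have "nsq (w p - wh p) = (\<Sum>t<n. (norm ((w p - wh p) $ t))^2)" unfolding nsq_def d ..
      also have "\<dots> = (\<Sum>t<n. (norm ((X - Y) (p[j := t])))^2)"
      proof (intro sum.cong refl)
        fix t assume "t \<in> {..<n}"
        hence t: "t < J ! j" unfolding n_def by simp
        have "(w p - wh p) $ t = w p $ t - wh p $ t" using t unfolding wh_def by simp
        also have "\<dots> = (X - Y) (p[j := t])" unfolding w_def wh_def using t by simp
        finally show "(norm ((w p - wh p) $ t))^2 = (norm ((X - Y) (p[j := t])))^2" by simp
      qed
      finally show "(\<Sum>t<n. (norm ((X - Y) (p[j := t])))^2) = nsq (w p - wh p)" by simp
    qed
    finally show ?thesis .
  qed
  have "frob (J[j := r]) (mode_prod X j (mat_adjoint V) - mode_prod Y j (mat_adjoint Vh)) \<le> frob J (X - Y)"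
    unfolding frob_sum lhs rhs using ineq by simp
  thus ?thesis using Vh rng unfolding n_def by blast
qed

lemma onm_orth: "onm V n k \<Longrightarrow> V \<in> carrier_mat n k \<and> orthonormal_cols V"
  unfolding onm_def orthonormal_cols_def by auto

lemma orth_onm: "V \<in> carrier_mat n k \<Longrightarrow> orthonormal_cols V \<Longrightarrow> onm V n k"
  unfolding onm_def orthonormal_cols_def by auto

lemma mode_fibers_carrier: "mode_fibers I j X \<subseteq> carrier_vec (I ! j)"
  unfolding mode_fibers_def by auto

lemma mode_fibers_finite: "finite (mode_fibers I j X)"
  unfolding mode_fibers_def using tidx_finite by simp

lemma mlrank_vdim: "mlrank_mode I j X = vdim (I ! j) (mode_fibers I j X)"
  unfolding mlrank_mode_def fiber_span_def ..

lemma fiber_span_vspan: "fiber_span I j X = vspan (I ! j) (mode_fibers I j X)"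
  unfolding fiber_span_def ..

lemma fiber_in_span: "ix \<in> tidx I \<Longrightarrow> fiber X I j ix \<in> fiber_span I j X"
proof -
  assume ix: "ix \<in> tidx I"
  interpret vs: vec_space "TYPE('a)" "I ! j" .
  have "mode_fibers I j X \<subseteq> vs.span (mode_fibers I j X)"
    by (rule vs.in_own_span[OF mode_fibers_carrier])
  thus ?thesis unfolding fiber_span_vspan mode_fibers_def using ix by auto
qed

lemma rank_le: assumes "has_mlrank I X R" "j < length I" shows "R ! j \<le> I ! j"
  using assms vdim_le_n[OF mode_fibers_carrier mode_fibers_finite, of I j X]
  unfolding has_mlrank_def mlrank_vdim by auto

lemma exists_B_fibers:
  fixes X :: "'a::rc_field tensor"
  assumes "mlrank_mode I j X \<le> r" "r \<le> I ! j"
  shows "\<exists>B. onm B (I ! j) r \<and> mode_fibers I j X \<subseteq> mat_range B"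
  using exists_B[OF mode_fibers_carrier mode_fibers_finite, of I j X r] assms unfolding mlrank_vdim by simp

lemma fiber_span_sub: assumes "onm B (I ! j) r" "mode_fibers I j X \<subseteq> mat_range B"
  shows "fiber_span I j X \<subseteq> mat_range B"
  unfolding fiber_span_vspan by (rule span_sub_range[OF onm_carrier[OF assms(1)] assms(2)])

theorem part1:
  fixes I R Rh :: "nat list"
    and W' Wh' :: "'a::rc_field tensor"
  assumes rW: "has_mlrank I W' R"
    and rWh: "has_mlrank I Wh' Rh"
    and j: "j < length I" and Vc: "V \<in> carrier_mat (I ! j) (R ! j)" and Vo: "orthonormal_cols V"
    and Vr: "mat_range V = fiber_span I j W'" and le: "Rh ! j \<le> R ! j"
  shows "\<exists>Vh. Vh \<in> carrier_mat (I ! j) (R ! j) \<and> orthonormal_cols Vh \<and>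
              fiber_span I j Wh' \<subseteq> mat_range Vh \<and>
              frob (I[j := R ! j]) (mode_prod W' j (mat_adjoint V) - mode_prod Wh' j (mat_adjoint Vh))
                \<le> frob I (W' - Wh')"
proof -
  have V: "onm V (I ! j) (R ! j)" by (rule orth_onm[OF Vc Vo])
  have "mlrank_mode I j Wh' \<le> R ! j" using rWh j le unfolding has_mlrank_def by auto
  moreover have "R ! j \<le> I ! j" by (rule rank_le[OF rW j])
  ultimately obtain B where B: "onm B (I ! j) (R ! j)" and TB: "mode_fibers I j Wh' \<subseteq> mat_range B"
    using exists_B_fibers by blast
  have fX: "fiber W' I j ix \<in> mat_range V" if "ix \<in> tidx I" for ix
    unfolding Vr by (rule fiber_in_span[OF that])
  have fY: "fiber Wh' I j ix \<in> mat_range B" if "ix \<in> tidx I" for ix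
    using TB that unfolding mode_fibers_def by auto
  obtain Vh where Vh: "onm Vh (I ! j) (R ! j)" and rng: "mat_range B \<subseteq> mat_range Vh"
    and ineq: "frob (I[j := R ! j]) (mode_prod W' j (mat_adjoint V) - mode_prod Wh' j (mat_adjoint Vh)) \<le> frob I (W' - Wh')"
    using mode_step[OF j V B fX fY] by blast
  have "fiber_span I j Wh' \<subseteq> mat_range Vh" using fiber_span_sub[OF B TB] rng by auto
  thus ?thesis using onm_orth[OF Vh] ineq by blast
qed


lemma compress_nil[simp]: "compress X [] = X"
  unfolding compress_def by simp

lemma compress_snoc: "compress X (xs @ [v]) = mode_prod (compress X xs) (length xs) (mat_adjoint v)"
proof -
  have "zip [0..<length (xs @ [v])] (xs @ [v]) = zip [0..<length xs] xs @ [(length xs, v)]"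
    by simp
  thus ?thesis unfolding compress_def by simp
qed

lemma fiber_mode_prod_range:
  fixes X :: "'a::comm_ring_1 tensor"
  assumes ik: "i \<noteq> k" and i: "i < length J" and k: "k < length J"
    and M: "M \<in> carrier_mat m (J ! k)" and C: "C \<in> carrier_mat (J ! i) q"
    and fX: "\<And>ix. ix \<in> tidx J \<Longrightarrow> fiber X J i ix \<in> mat_range C"
    and p: "p \<in> tidx (J[k := m])"
  shows "fiber (mode_prod X k M) (J[k := m]) i p \<in> mat_range C"
proof -
  have lp: "length p = length J" using p unfolding tidx_def by simp
  have ex: "\<exists>z. z \<in> carrier_vec q \<and> fiber X J i (p[k := t]) = C *\<^sub>v z" if t: "t < J ! k" for t
  proof -
    have "p[k := t] \<in> tidx J" by (rule tidx_upd[OF p t k])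
    hence "fiber X J i (p[k := t]) \<in> mat_range C" by (rule fX)
    thus ?thesis unfolding mat_range_def using C by auto
  qed
  define z where "z = (\<lambda>t. SOME z. z \<in> carrier_vec q \<and> fiber X J i (p[k := t]) = C *\<^sub>v z)"
  have z: "z t \<in> carrier_vec q" "fiber X J i (p[k := t]) = C *\<^sub>v z t" if "t < J ! k" for t
    using someI_ex[OF ex[OF that]] unfolding z_def by auto
  define zz where "zz = vec q (\<lambda>l. \<Sum>t<J ! k. M $$ (p ! k, t) * z t $ l)"
  have Ji: "J[k := m] ! i = J ! i" using ik by simp
  have "fiber (mode_prod X k M) (J[k := m]) i p = C *\<^sub>v zz"
  proof (rule eq_vecI)
    fix s assume "s < dim_vec (C *\<^sub>v zz)"
    hence s: "s < J ! i" using C by simp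
    have "fiber (mode_prod X k M) (J[k := m]) i p $ s = mode_prod X k M (p[i := s])"
      using s Ji by simp
    also have "\<dots> = (\<Sum>t<J ! k. M $$ (p ! k, t) * X (p[k := t, i := s]))"
      unfolding mode_prod_def using M ik lp i k by (simp add: list_update_swap)
    also have "\<dots> = (\<Sum>t<J ! k. M $$ (p ! k, t) * (\<Sum>l<q. C $$ (s, l) * z t $ l))"
    proof (intro sum.cong refl)
      fix t assume "t \<in> {..<J ! k}"
      hence t: "t < J ! k" by simp
      have "X (p[k := t, i := s]) = fiber X J i (p[k := t]) $ s" using s by simp
      also have "\<dots> = (C *\<^sub>v z t) $ s" using z(2)[OF t] by simp
      also have "\<dots> = (\<Sum>l<q. C $$ (s, l) * z t $ l)" using C s z(1)[OF t]
        by (simp add: scalar_prod_def atLeast0LessThan)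
      finally show "M $$ (p ! k, t) * X (p[k := t, i := s]) = M $$ (p ! k, t) * (\<Sum>l<q. C $$ (s, l) * z t $ l)"
        by simp
    qed
    also have "\<dots> = (\<Sum>l<q. C $$ (s, l) * (\<Sum>t<J ! k. M $$ (p ! k, t) * z t $ l))"
      by (simp add: sum_distrib_left sum_distrib_right mult_ac, subst sum.swap, rule refl)
    also have "\<dots> = (C *\<^sub>v zz) $ s" using C s unfolding zz_def by (simp add: scalar_prod_def atLeast0LessThan)
    finally show "fiber (mode_prod X k M) (J[k := m]) i p $ s = (C *\<^sub>v zz) $ s" .
  qed (use C Ji in simp)
  moreover have "zz \<in> carrier_vec q" unfolding zz_def by simp
  ultimately show ?thesis unfolding mat_range_def using C by auto
qed


definition Jk :: "nat list \<Rightarrow> nat list \<Rightarrow> nat \<Rightarrow> nat list" where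
  "Jk Rs I k = take k Rs @ drop k I"

lemma Jk_length: "length Rs = length I \<Longrightarrow> k \<le> length I \<Longrightarrow> length (Jk Rs I k) = length I"
  unfolding Jk_def by simp

lemma Jk_nth: "length Rs = length I \<Longrightarrow> k \<le> length I \<Longrightarrow> i < length I \<Longrightarrow>
   Jk Rs I k ! i = (if i < k then Rs ! i else I ! i)"
  unfolding Jk_def by (auto simp: nth_append min_def)

lemma Jk_0: "Jk Rs I 0 = I" unfolding Jk_def by simp

lemma Jk_full: "length Rs = length I \<Longrightarrow> Jk Rs I (length I) = Rs" unfolding Jk_def by simp

lemma Jk_Suc: assumes "length Rs = length I" "k < length I"
  shows "Jk Rs I (Suc k) = (Jk Rs I k)[k := Rs ! k]"
proof (rule nth_equalityI)
  show "length (Jk Rs I (Suc k)) = length ((Jk Rs I k)[k := Rs ! k])" using assms Jk_length by simp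
  fix i assume "i < length (Jk Rs I (Suc k))"
  hence i: "i < length I" using assms Jk_length by simp
  show "Jk Rs I (Suc k) ! i = (Jk Rs I k)[k := Rs ! k] ! i"
    using assms i by (simp add: Jk_nth Jk_length nth_list_update)
qed

theorem part2:
  fixes I R Rh :: "nat list"
    and W' Wh' :: "'a::rc_field tensor"
  assumes rW: "has_mlrank I W' R"
    and rWh: "has_mlrank I Wh' Rh"
  defines "Rs \<equiv> map2 max R Rh"
  shows "\<exists>Vs Vhs. orth_compression_mats I W' Rs Vs \<and> orth_compression_mats I Wh' Rs Vhs \<and>
          frob Rs (compress W' Vs - compress Wh' Vhs) \<le> frob I (W' - Wh')"
proof -
  define l where "l = length I"
  have lR: "length R = l" "length Rh = l" using rW rWh unfolding has_mlrank_def l_def by auto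
  have lRs: "length Rs = l" unfolding Rs_def using lR by simp
  have Rsi: "Rs ! i = max (R ! i) (Rh ! i)" if "i < l" for i unfolding Rs_def using that lR by simp
  have RsI: "Rs ! i \<le> I ! i" if "i < l" for i
    using Rsi[OF that] rank_le[OF rW] rank_le[OF rWh] that unfolding l_def by simp
  have exV: "\<exists>V. onm V (I ! i) (Rs ! i) \<and> mode_fibers I i W' \<subseteq> mat_range V" if "i < l" for i
  proof (rule exists_B_fibers)
    show "mlrank_mode I i W' \<le> Rs ! i" using rW that Rsi[OF that] unfolding has_mlrank_def l_def by auto
  qed (rule RsI[OF that])
  have exB: "\<exists>V. onm V (I ! i) (Rs ! i) \<and> mode_fibers I i Wh' \<subseteq> mat_range V" if "i < l" for i
  proof (rule exists_B_fibers)
    show "mlrank_mode I i Wh' \<le> Rs ! i" using rWh that Rsi[OF that] unfolding has_mlrank_def l_def by auto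
  qed (rule RsI[OF that])
  define Vs where "Vs = map (\<lambda>i. SOME V. onm V (I ! i) (Rs ! i) \<and> mode_fibers I i W' \<subseteq> mat_range V) [0..<l]"
  define Bs where "Bs = map (\<lambda>i. SOME V. onm V (I ! i) (Rs ! i) \<and> mode_fibers I i Wh' \<subseteq> mat_range V) [0..<l]"
  have lVs: "length Vs = l" unfolding Vs_def by simp
  have Vs: "onm (Vs ! i) (I ! i) (Rs ! i) \<and> mode_fibers I i W' \<subseteq> mat_range (Vs ! i)" if "i < l" for i
    unfolding Vs_def using someI_ex[OF exV[OF that]] that by simp
  have Bs: "onm (Bs ! i) (I ! i) (Rs ! i) \<and> mode_fibers I i Wh' \<subseteq> mat_range (Bs ! i)" if "i < l" for i
    unfolding Bs_def using someI_ex[OF exB[OF that]] that by simp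
  let ?J = "Jk Rs I"
  have lRs': "length Rs = length I" using lRs l_def by simp
  have main: "k \<le> l \<Longrightarrow> \<exists>Vhs. length Vhs = k \<and>
      (\<forall>i<k. onm (Vhs ! i) (I ! i) (Rs ! i) \<and> fiber_span I i Wh' \<subseteq> mat_range (Vhs ! i)) \<and>
      frob (?J k) (compress W' (take k Vs) - compress Wh' Vhs) \<le> frob I (W' - Wh') \<and>
      (\<forall>i. k \<le> i \<and> i < l \<longrightarrow>
         (\<forall>ix\<in>tidx (?J k). fiber (compress W' (take k Vs)) (?J k) i ix \<in> mat_range (Vs ! i)) \<and>
         (\<forall>ix\<in>tidx (?J k). fiber (compress Wh' Vhs) (?J k) i ix \<in> mat_range (Bs ! i)))" for k
  proof (induct k)
    case 0
    have "fiber W' I i ix \<in> mat_range (Vs ! i)" if "i < l" "ix \<in> tidx I" for i ix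
      using Vs[OF that(1)] that(2) unfolding mode_fibers_def by auto
    moreover have "fiber Wh' I i ix \<in> mat_range (Bs ! i)" if "i < l" "ix \<in> tidx I" for i ix
      using Bs[OF that(1)] that(2) unfolding mode_fibers_def by auto
    ultimately show ?case unfolding Jk_0 by (intro exI[of _ "[]"]) auto
  next
    case (Suc k)
    hence k: "k < l" by simp
    from Suc.hyps[OF less_imp_le[OF k]] obtain Vhs where lV: "length Vhs = k"
      and Vh_ok: "\<forall>i<k. onm (Vhs ! i) (I ! i) (Rs ! i) \<and> fiber_span I i Wh' \<subseteq> mat_range (Vhs ! i)"
      and fr: "frob (?J k) (compress W' (take k Vs) - compress Wh' Vhs) \<le> frob I (W' - Wh')"
      and inv: "\<forall>i. k \<le> i \<and> i < l \<longrightarrow>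
         (\<forall>ix\<in>tidx (?J k). fiber (compress W' (take k Vs)) (?J k) i ix \<in> mat_range (Vs ! i)) \<and>
         (\<forall>ix\<in>tidx (?J k). fiber (compress Wh' Vhs) (?J k) i ix \<in> mat_range (Bs ! i))" by blast
    define X where "X = compress W' (take k Vs)"
    define Y where "Y = compress Wh' Vhs"
    have kl: "k \<le> length I" "k < length I" using k unfolding l_def by auto
    have lJ: "length (?J k) = l" using Jk_length[OF lRs' kl(1)] unfolding l_def .
    have Jkk: "?J k ! k = I ! k" using Jk_nth[OF lRs' kl(1) kl(2)] by simp
    have Vk: "onm (Vs ! k) (?J k ! k) (Rs ! k)" using Vs[OF k] Jkk by simp
    have Bk: "onm (Bs ! k) (?J k ! k) (Rs ! k)" using Bs[OF k] Jkk by simp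
    have fX: "fiber X (?J k) k ix \<in> mat_range (Vs ! k)" if "ix \<in> tidx (?J k)" for ix
      using inv k that unfolding X_def by auto
    have fY: "fiber Y (?J k) k ix \<in> mat_range (Bs ! k)" if "ix \<in> tidx (?J k)" for ix
      using inv k that unfolding Y_def by auto
    obtain Vh where Vh: "onm Vh (?J k ! k) (Rs ! k)" and rng: "mat_range (Bs ! k) \<subseteq> mat_range Vh"
      and ineq: "frob ((?J k)[k := Rs ! k]) (mode_prod X k (mat_adjoint (Vs ! k)) - mode_prod Y k (mat_adjoint Vh))
         \<le> frob (?J k) (X - Y)"
      using mode_step[OF _ Vk Bk fX fY] k lJ by auto
    define Vhs' where "Vhs' = Vhs @ [Vh]"
    have tk: "take (Suc k) Vs = take k Vs @ [Vs ! k]" using k lVs by (simp add: take_Suc_conv_app_nth)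
    have X': "compress W' (take (Suc k) Vs) = mode_prod X k (mat_adjoint (Vs ! k))"
      unfolding tk compress_snoc X_def using k lVs by simp
    have Y': "compress Wh' Vhs' = mode_prod Y k (mat_adjoint Vh)"
      unfolding Vhs'_def compress_snoc Y_def lV ..
    have J': "?J (Suc k) = (?J k)[k := Rs ! k]" by (rule Jk_Suc[OF lRs' kl(2)])
    have "length Vhs' = Suc k" unfolding Vhs'_def using lV by simp
    moreover have "\<forall>i<Suc k. onm (Vhs' ! i) (I ! i) (Rs ! i) \<and> fiber_span I i Wh' \<subseteq> mat_range (Vhs' ! i)"
    proof (intro allI impI)
      fix i assume i: "i < Suc k"
      show "onm (Vhs' ! i) (I ! i) (Rs ! i) \<and> fiber_span I i Wh' \<subseteq> mat_range (Vhs' ! i)"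
      proof (cases "i < k")
        case True
        thus ?thesis unfolding Vhs'_def using Vh_ok lV by (simp add: nth_append)
      next
        case False
        hence ik: "i = k" using i by simp
        have "fiber_span I k Wh' \<subseteq> mat_range (Bs ! k)" using fiber_span_sub Bs[OF k] by blast
        thus ?thesis unfolding Vhs'_def using ik lV Vh Jkk rng by (simp add: nth_append)
      qed
    qed
    moreover have "frob (?J (Suc k)) (compress W' (take (Suc k) Vs) - compress Wh' Vhs') \<le> frob I (W' - Wh')"
      unfolding J' X' Y' using ineq fr unfolding X_def Y_def by simp
    moreover have "\<forall>i. Suc k \<le> i \<and> i < l \<longrightarrow>
         (\<forall>ix\<in>tidx (?J (Suc k)). fiber (compress W' (take (Suc k) Vs)) (?J (Suc k)) i ix \<in> mat_range (Vs ! i)) \<and>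
         (\<forall>ix\<in>tidx (?J (Suc k)). fiber (compress Wh' Vhs') (?J (Suc k)) i ix \<in> mat_range (Bs ! i))"
    proof (intro allI impI conjI ballI)
      fix i ix assume i: "Suc k \<le> i \<and> i < l" and ix: "ix \<in> tidx (?J (Suc k))"
      have ik: "i \<noteq> k" using i by simp
      have il: "i < length (?J k)" using i lJ by simp
      have kl': "k < length (?J k)" using k lJ by simp
      have Ji: "?J k ! i = I ! i" using Jk_nth[OF lRs' kl(1)] i unfolding l_def by simp
      have ix': "ix \<in> tidx ((?J k)[k := Rs ! k])" using ix J' by simp
      show "fiber (compress W' (take (Suc k) Vs)) (?J (Suc k)) i ix \<in> mat_range (Vs ! i)"
        unfolding X' J'
      proof (rule fiber_mode_prod_range[OF ik il kl' _ _ _ ix'])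
        show "mat_adjoint (Vs ! k) \<in> carrier_mat (Rs ! k) (?J k ! k)"
          using onm_carrier[OF Vk] by simp
        show "Vs ! i \<in> carrier_mat (?J k ! i) (Rs ! i)" using onm_carrier Vs i Ji by auto
        show "\<And>ix. ix \<in> tidx (?J k) \<Longrightarrow> fiber X (?J k) i ix \<in> mat_range (Vs ! i)"
          using inv i unfolding X_def by auto
      qed
      show "fiber (compress Wh' Vhs') (?J (Suc k)) i ix \<in> mat_range (Bs ! i)"
        unfolding Y' J'
      proof (rule fiber_mode_prod_range[OF ik il kl' _ _ _ ix'])
        show "mat_adjoint Vh \<in> carrier_mat (Rs ! k) (?J k ! k)"
          using onm_carrier[OF Vh] by simp
        show "Bs ! i \<in> carrier_mat (?J k ! i) (Rs ! i)" using onm_carrier Bs i Ji by auto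
        show "\<And>ix. ix \<in> tidx (?J k) \<Longrightarrow> fiber Y (?J k) i ix \<in> mat_range (Bs ! i)"
          using inv i unfolding Y_def by auto
      qed
    qed
    ultimately show ?case by blast
  qed
  from main[of l] obtain Vhs where lV: "length Vhs = l"
    and Vh_ok: "\<forall>i<l. onm (Vhs ! i) (I ! i) (Rs ! i) \<and> fiber_span I i Wh' \<subseteq> mat_range (Vhs ! i)"
    and fr: "frob (?J l) (compress W' (take l Vs) - compress Wh' Vhs) \<le> frob I (W' - Wh')" by auto
  have "orth_compression_mats I W' Rs Vs"
    unfolding orth_compression_mats_def
    using lVs lRs Vs onm_orth fiber_span_sub unfolding l_def by blast
  moreover have "orth_compression_mats I Wh' Rs Vhs"
    unfolding orth_compression_mats_def
    using lV lRs Vh_ok onm_orth unfolding l_def by blast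
  moreover have "frob Rs (compress W' Vs - compress Wh' Vhs) \<le> frob I (W' - Wh')"
    using fr Jk_full[OF lRs'] lVs unfolding l_def by simp
  ultimately show ?thesis by blast
qed

theorem theorem4p1:
  fixes I R Rh :: "nat list"
    and W' Wh' :: "'a::rc_field tensor"
  assumes rW: "has_mlrank I W' R"
    and rWh: "has_mlrank I Wh' Rh"
  shows
    "(\<forall>j V. j < length I \<longrightarrow> V \<in> carrier_mat (I ! j) (R ! j) \<longrightarrow> orthonormal_cols V \<longrightarrow>
        mat_range V = fiber_span I j W' \<longrightarrow> Rh ! j \<le> R ! j \<longrightarrow>
        (\<exists>Vh. Vh \<in> carrier_mat (I ! j) (R ! j) \<and> orthonormal_cols Vh \<and>
              fiber_span I j Wh' \<subseteq> mat_range Vh \<and>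
              frob (I[j := R ! j]) (mode_prod W' j (mat_adjoint V) - mode_prod Wh' j (mat_adjoint Vh))
                \<le> frob I (W' - Wh')))
   \<and> (let Rs = map2 max R Rh in
        \<exists>Vs Vhs. orth_compression_mats I W' Rs Vs \<and> orth_compression_mats I Wh' Rs Vhs \<and>
          frob Rs (compress W' Vs - compress Wh' Vhs) \<le> frob I (W' - Wh'))"
proof
  show "\<forall>j V. j < length I \<longrightarrow> V \<in> carrier_mat (I ! j) (R ! j) \<longrightarrow> orthonormal_cols V \<longrightarrow>
        mat_range V = fiber_span I j W' \<longrightarrow> Rh ! j \<le> R ! j \<longrightarrow>
        (\<exists>Vh. Vh \<in> carrier_mat (I ! j) (R ! j) \<and> orthonormal_cols Vh \<and>
              fiber_span I j Wh' \<subseteq> mat_range Vh \<and>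
              frob (I[j := R ! j]) (mode_prod W' j (mat_adjoint V) - mode_prod Wh' j (mat_adjoint Vh))
                \<le> frob I (W' - Wh'))"
    using part1[OF rW rWh] by blast
  show "let Rs = map2 max R Rh in
        \<exists>Vs Vhs. orth_compression_mats I W' Rs Vs \<and> orth_compression_mats I Wh' Rs Vhs \<and>
          frob Rs (compress W' Vs - compress Wh' Vhs) \<le> frob I (W' - Wh')"
    unfolding Let_def by (rule part2[OF rW rWh])
qed

end
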